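(* Let $\lambda^*(\theta)$ be as defined in the context. Then (1) $\theta\mapsto\lambda^*(\theta)$ is continuous on $(0,\infty)$; (2) if $\gamma>e^{r\tau}$ and $k>0$, $\theta\mapsto\lambda^*(\theta)$ is continuous on $(\underline\theta,0]$.
   Context: Let $B$ be a one-dimensional standard Brownian motion on a complete probability space $(\Omega,\mathcal F,\mathbb P)$ with augmented natural filtration $(\mathcal F_t)$. Constants $\mu,r\in\mathbb R$, $\sigma>0$, $\phi:=(\mu-r)/\sigma\neq0$; pricing kernel $Z_t=\exp(-\phi B_t-(r+\phi^2/2)t)$. Fix $\tau>0$, $\alpha\in(0,1)$, $k\ge0$, $\gamma>0$; $\underline\theta:=-(1+k^{1/(1-\alpha)})^{1-\alpha}$. For $\theta>0$, let $\tilde c:=1/(1+(k/\theta)^{1/(2-\alpha)})$; $(c_1,c_2)\in(0,\tilde c)\times(1,\infty)$ is the unique solution of $\frac{(c_2-1)^\alpha+\theta c_2^\alpha+k(1-c_1)^\alpha-\theta c_1^\alpha}{c_2-c_1}=\alpha[(c_2-1)^{\alpha-1}+\theta c_2^{\alpha-1}]=\alpha[k(1-c_1)^{\alpha-1}+\theta c_1^{\alpha-1}]$, $m_1(\theta):=\gamma^{\alpha-1}\frac{(c_2-1)^\alpha+\theta c_2^\alpha+k(1-c_1)^\alpha-\theta c_1^\alpha}{c_2-c_1}$, and for $q\ge\tilde n:=\alpha[k(\gamma-\tilde c\gamma)^{\alpha-1}+\theta(\tilde c\gamma)^{\alpha-1}]$, $I_1(q;\theta)$ is the unique $y\in(0,\tilde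 c\gamma]$ with $\alpha[k(\gamma-y)^{\alpha-1}+\theta y^{\alpha-1}]=q$. For $q>0$, $I_2(q;\theta)$ is the unique $y>\gamma$ with $\alpha[(y-\gamma)^{\alpha-1}+\theta y^{\alpha-1}]=q$. For $\theta\in(\underline\theta,0]$, let $c_4:=1/(1-|\theta|^{-1/(1-\alpha)})$ if $\theta<-1$ and $c_4:=\infty$ otherwise; $c_3$ is the unique solution in $(1,c_4)$ of $\frac{(c_3-1)^\alpha+\theta c_3^\alpha+k}{c_3}=\alpha[(c_3-1)^{\alpha-1}+\theta c_3^{\alpha-1}]$ and $m_2(\theta):=\gamma^{\alpha-1}\frac{(c_3-1)^\alpha+\theta c_3^\alpha+k}{c_3}$. For $\lambda>0$: if $\theta>0$, $y_\lambda(z;\theta):=I_1(\lambda z;\theta)1_{\{\lambda z>m_1(\theta)\}}+I_2(\lambda z;\theta)1_{\{\lambda z\le m_1(\theta)\}}$; if $\theta\in(\underline\theta,0]$ with either $\theta\ge-1$ or $|\theta|^{-1/(1-\alpha)}>1-\gamma e^{-r\tau}$, $y_\lambda(z;\theta):=I_2(\lambda z;\theta)1_{\{\lambda z\le m_2(\theta)\}}$. In these cases $\lambda^*(\theta)>0$ is the unique $\lambda>0$ with $\mathbb E[Z_\tau y_\lambda(Z_\tau;\theta)]=1$. *)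

theory Defs
  imports "HOL-Probability.Probability"
begin

definition std_brownian_motion :: "'a measure \<Rightarrow> (real \<Rightarrow> 'a \<Rightarrow> real) \<Rightarrow> bool" where
  "std_brownian_motion M B \<longleftrightarrow>
     prob_space M \<and>
     (\<forall>t\<ge>0. B t \<in> borel_measurable M) \<and>
     (AE \<omega> in M. B 0 \<omega> = 0) \<and>
     (AE \<omega> in M. continuous_on {0..} (\<lambda>t. B t \<omega>)) \<and>
     (\<forall>s t. 0 \<le> s \<and> s < t \<longrightarrow>
        distributed M lborel (\<lambda>\<omega>. B t \<omega> - B s \<omega>) (normal_density 0 (sqrt (t - s)))) \<and>
     (\<forall>(ts :: nat \<Rightarrow> real) n. 0 \<le> ts 0 \<and> (\<forall>i<n. ts i < ts (Suc i)) \<longrightarrow>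
        prob_space.indep_vars M (\<lambda>_. borel) (\<lambda>i \<omega>. B (ts (Suc i)) \<omega> - B (ts i) \<omega>) {..<n})"

definition theta_low :: "real \<Rightarrow> real \<Rightarrow> real" where
  "theta_low \<alpha> k = - ((1 + k powr (1 / (1 - \<alpha>))) powr (1 - \<alpha>))"

definition c_tilde :: "real \<Rightarrow> real \<Rightarrow> real \<Rightarrow> real" where
  "c_tilde \<alpha> k \<theta> = 1 / (1 + (k / \<theta>) powr (1 / (2 - \<alpha>)))"

definition c12 :: "real \<Rightarrow> real \<Rightarrow> real \<Rightarrow> real \<times> real" where
  "c12 \<alpha> k \<theta> = (THE p. 0 < fst p \<and> fst p < c_tilde \<alpha> k \<theta> \<and> 1 < snd p \<and>
      ((snd p - 1) powr \<alpha> + \<theta> * snd p powr \<alpha> + k * (1 - fst p) powr \<alpha> - \<theta> * fst p powr \<alpha>)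
          / (snd p - fst p)
        = \<alpha> * ((snd p - 1) powr (\<alpha> - 1) + \<theta> * snd p powr (\<alpha> - 1)) \<and>
      \<alpha> * ((snd p - 1) powr (\<alpha> - 1) + \<theta> * snd p powr (\<alpha> - 1))
        = \<alpha> * (k * (1 - fst p) powr (\<alpha> - 1) + \<theta> * fst p powr (\<alpha> - 1)))"

definition m1 :: "real \<Rightarrow> real \<Rightarrow> real \<Rightarrow> real \<Rightarrow> real" where
  "m1 \<alpha> k \<gamma> \<theta> = (let c1 = fst (c12 \<alpha> k \<theta>); c2 = snd (c12 \<alpha> k \<theta>) in
     \<gamma> powr (\<alpha> - 1) *
     (((c2 - 1) powr \<alpha> + \<theta> * c2 powr \<alpha> + k * (1 - c1) powr \<alpha> - \<theta> * c1 powr \<alpha>) / (c2 - c1)))"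

definition I1 :: "real \<Rightarrow> real \<Rightarrow> real \<Rightarrow> real \<Rightarrow> real \<Rightarrow> real" where
  "I1 \<alpha> k \<gamma> \<theta> q = (THE y. 0 < y \<and> y \<le> c_tilde \<alpha> k \<theta> * \<gamma> \<and>
      \<alpha> * (k * (\<gamma> - y) powr (\<alpha> - 1) + \<theta> * y powr (\<alpha> - 1)) = q)"

definition I2 :: "real \<Rightarrow> real \<Rightarrow> real \<Rightarrow> real \<Rightarrow> real" where
  "I2 \<alpha> \<gamma> \<theta> q = (THE y. \<gamma> < y \<and>
      \<alpha> * ((y - \<gamma>) powr (\<alpha> - 1) + \<theta> * y powr (\<alpha> - 1)) = q)"

text \<open>c3 for \<theta> \<le> 0; the bound c4 is +\<infinity> unless \<theta> < -1.\<close>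
definition c3 :: "real \<Rightarrow> real \<Rightarrow> real \<Rightarrow> real" where
  "c3 \<alpha> k \<theta> = (THE c. 1 < c \<and>
      (\<theta> < -1 \<longrightarrow> c < 1 / (1 - \<bar>\<theta>\<bar> powr (- 1 / (1 - \<alpha>)))) \<and>
      ((c - 1) powr \<alpha> + \<theta> * c powr \<alpha> + k) / c
        = \<alpha> * ((c - 1) powr (\<alpha> - 1) + \<theta> * c powr (\<alpha> - 1)))"

definition m2 :: "real \<Rightarrow> real \<Rightarrow> real \<Rightarrow> real \<Rightarrow> real" where
  "m2 \<alpha> k \<gamma> \<theta> = (let c = c3 \<alpha> k \<theta> in
     \<gamma> powr (\<alpha> - 1) * (((c - 1) powr \<alpha> + \<theta> * c powr \<alpha> + k) / c))"

definition y_lam :: "real \<Rightarrow> real \<Rightarrow> real \<Rightarrow> real \<Rightarrow> real \<Rightarrow> real \<Rightarrow> real" where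
  "y_lam \<alpha> k \<gamma> \<theta> lam z =
     (if 0 < \<theta> then
        (if lam * z > m1 \<alpha> k \<gamma> \<theta> then I1 \<alpha> k \<gamma> \<theta> (lam * z) else I2 \<alpha> \<gamma> \<theta> (lam * z))
      else (if lam * z \<le> m2 \<alpha> k \<gamma> \<theta> then I2 \<alpha> \<gamma> \<theta> (lam * z) else 0))"

definition pricing_kernel :: "real \<Rightarrow> real \<Rightarrow> (real \<Rightarrow> 'a \<Rightarrow> real) \<Rightarrow> real \<Rightarrow> 'a \<Rightarrow> real" where
  "pricing_kernel \<phi> r B t \<omega> = exp (- \<phi> * B t \<omega> - (r + \<phi>\<^sup>2 / 2) * t)"

definition lambda_star :: "'a measure \<Rightarrow> (real \<Rightarrow> 'a \<Rightarrow> real) \<Rightarrow> real \<Rightarrow> real \<Rightarrow> real \<Rightarrow>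
    real \<Rightarrow> real \<Rightarrow> real \<Rightarrow> real \<Rightarrow> real \<Rightarrow> real" where
  "lambda_star M B \<mu> r \<sigma> \<tau> \<alpha> k \<gamma> \<theta> =
     (let \<phi> = (\<mu> - r) / \<sigma>;
          X = (\<lambda>lam \<omega>. pricing_kernel \<phi> r B \<tau> \<omega> *
                        y_lam \<alpha> k \<gamma> \<theta> lam (pricing_kernel \<phi> r B \<tau> \<omega>))
      in THE lam. 0 < lam \<and> integrable M (X lam) \<and> (\<integral>\<omega>. X lam \<omega> \<partial>M) = 1)"

end

theory Submission
  imports Defs
begin

lemma mvt_lower:
  fixes f f' :: "real \<Rightarrow> real"
  assumes "a \<le> b" "continuous_on {a..b} f"
    "\<And>x. a < x \<Longrightarrow> x < b \<Longrightarrow> (f has_real_derivative f' x) (at x)"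
    "\<And>x. a < x \<Longrightarrow> x < b \<Longrightarrow> c \<le> f' x"
  shows "c * (b - a) \<le> f b - f a"
proof -
  have "(\<lambda>x. f x - c * x) a \<le> (\<lambda>x. f x - c * x) b"
  proof (rule DERIV_nonneg_imp_increasing_open[OF assms(1)])
    fix x assume x: "a < x" "x < b"
    show "\<exists>y. ((\<lambda>x. f x - c * x) has_real_derivative y) (at x) \<and> 0 \<le> y"
      by (rule exI[of _ "f' x - c"]) (use assms(3,4)[OF x] in \<open>auto intro!: derivative_eq_intros\<close>)
  qed (use assms(2) in \<open>auto intro!: continuous_intros\<close>)
  then show ?thesis by (simp add: algebra_simps)
qed

lemma mvt_upper:
  fixes f f' :: "real \<Rightarrow> real"
  assumes "a \<le> b" "continuous_on {a..b} f"
    "\<And>x. a < x \<Longrightarrow> x < b \<Longrightarrow> (f has_real_derivative f' x) (at x)"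
    "\<And>x. a < x \<Longrightarrow> x < b \<Longrightarrow> f' x \<le> c"
  shows "f b - f a \<le> c * (b - a)"
proof -
  have "(-c) * (b - a) \<le> (\<lambda>x. - f x) b - (\<lambda>x. - f x) a"
    by (rule mvt_lower[where f'="\<lambda>x. - f' x"])
       (use assms in \<open>auto intro!: derivative_eq_intros continuous_intros\<close>)
  then show ?thesis by (simp add: algebra_simps)
qed

lemma mvt_lower_strict:
  fixes f f' :: "real \<Rightarrow> real"
  assumes "a < b" "continuous_on {a..b} f"
    "\<And>x. a < x \<Longrightarrow> x < b \<Longrightarrow> (f has_real_derivative f' x) (at x)"
    "\<And>x. a < x \<Longrightarrow> x < b \<Longrightarrow> c < f' x"
  shows "c * (b - a) < f b - f a"
proof -
  have "(\<lambda>x. f x - c * x) a < (\<lambda>x. f x - c * x) b"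
  proof (rule DERIV_pos_imp_increasing_open[OF assms(1)])
    fix x assume x: "a < x" "x < b"
    show "\<exists>y. ((\<lambda>x. f x - c * x) has_real_derivative y) (at x) \<and> 0 < y"
      by (rule exI[of _ "f' x - c"]) (use assms(3,4)[OF x] in \<open>auto intro!: derivative_eq_intros\<close>)
  qed (use assms(2) in \<open>auto intro!: continuous_intros\<close>)
  then show ?thesis by (simp add: algebra_simps)
qed

locale prm =
  fixes \<alpha> k \<gamma> :: real
  assumes a0: "0 < \<alpha>" and a1: "\<alpha> < 1" and k0: "0 \<le> k" and g0: "0 < \<gamma>"
begin

definition h2 :: "real \<Rightarrow> real \<Rightarrow> real" where
  "h2 \<theta> y = \<alpha> * ((y - \<gamma>) powr (\<alpha> - 1) + \<theta> * y powr (\<alpha> - 1))"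

definition U2 :: "real \<Rightarrow> real \<Rightarrow> real" where
  "U2 \<theta> y = (y - \<gamma>) powr \<alpha> + \<theta> * y powr \<alpha>"

lemma h2_factor:
  assumes "\<gamma> < y"
  shows "h2 \<theta> y = \<alpha> * y powr (\<alpha> - 1) * (((y - \<gamma>) / y) powr (\<alpha> - 1) + \<theta>)"
proof -
  have "(y - \<gamma>) powr (\<alpha> - 1) = y powr (\<alpha> - 1) * ((y - \<gamma>) / y) powr (\<alpha> - 1)"
    using assms g0 by (simp add: powr_divide)
  then show ?thesis unfolding h2_def by (simp add: algebra_simps)
qed

lemma h2_mono:
  assumes "\<gamma> < y1" "y1 < y2" "0 < h2 \<theta> y2"
  shows "h2 \<theta> y2 < h2 \<theta> y1"
proof -
  have y1p: "0 < y1" using assms g0 by linarith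
  have r: "(y1 - \<gamma>) / y1 < (y2 - \<gamma>) / y2"
    using assms g0 y1p by (simp add: field_simps)
  have r0: "0 < (y1 - \<gamma>) / y1" using assms y1p by simp
  have rho: "((y2 - \<gamma>) / y2) powr (\<alpha> - 1) < ((y1 - \<gamma>) / y1) powr (\<alpha> - 1)"
    using powr_less_mono2_neg[OF _ r0 r] a1 by simp
  have yp: "y2 powr (\<alpha> - 1) < y1 powr (\<alpha> - 1)"
    using powr_less_mono2_neg[OF _ y1p assms(2)] a1 by simp
  have pos: "0 < ((y2 - \<gamma>) / y2) powr (\<alpha> - 1) + \<theta>"
    using assms(3) h2_factor[of y2 \<theta>] assms a0 y1p
    by (smt (verit, best) powr_gt_zero zero_less_mult_iff)
  have "y2 powr (\<alpha> - 1) * (((y2 - \<gamma>) / y2) powr (\<alpha> - 1) + \<theta>)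
        < y1 powr (\<alpha> - 1) * (((y1 - \<gamma>) / y1) powr (\<alpha> - 1) + \<theta>)"
    by (rule mult_strict_mono) (use yp rho pos in auto)
  then show ?thesis using h2_factor[of y1 \<theta>] h2_factor[of y2 \<theta>] assms a0
    by (simp add: mult.assoc)
qed

lemma h2_mono':
  assumes "\<gamma> < y1" "y1 < y2" "0 < h2 \<theta> y1"
  shows "h2 \<theta> y2 < h2 \<theta> y1"
proof (cases "0 < h2 \<theta> y2")
  case True then show ?thesis using h2_mono[OF assms(1,2)] by blast
next
  case False then show ?thesis using assms(3) by linarith
qed

lemma h2_cont: "continuous_on {\<gamma><..} (h2 \<theta>)"
  unfolding h2_def using g0 by (auto intro!: continuous_intros)

lemma powr_inv_cancel: "0 < x \<Longrightarrow> (x powr (1 / (\<alpha> - 1))) powr (\<alpha> - 1) = x"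
  using a1 by (simp add: powr_powr)

lemma h2_exists:
  assumes q: "0 < q"
  shows "\<exists>y>\<gamma>. h2 \<theta> y = q"
proof -
  define ya where "ya = \<gamma> + (q / \<alpha> + \<bar>\<theta>\<bar> * \<gamma> powr (\<alpha> - 1)) powr (1 / (\<alpha> - 1))"
  define yb where "yb = \<gamma> + (q / (\<alpha> * (1 + \<bar>\<theta>\<bar>))) powr (1 / (\<alpha> - 1))"
  have wa: "0 < q / \<alpha> + \<bar>\<theta>\<bar> * \<gamma> powr (\<alpha> - 1)" using q a0 by (simp add: add_pos_nonneg)
  have t1: "0 < 1 + \<bar>\<theta>\<bar>" using abs_ge_zero[of \<theta>] by linarith
  have wb: "0 < q / (\<alpha> * (1 + \<bar>\<theta>\<bar>))" by (rule divide_pos_pos[OF q mult_pos_pos[OF a0 t1]])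
  have ya: "\<gamma> < ya" using wa unfolding ya_def by simp
  have "0 < (q / (\<alpha> * (1 + \<bar>\<theta>\<bar>))) powr (1 / (\<alpha> - 1))"
    using wb by (metis powr_gt_zero less_irrefl)
  then have yb: "\<gamma> < yb" unfolding yb_def by linarith
  have ea: "(ya - \<gamma>) powr (\<alpha> - 1) = q / \<alpha> + \<bar>\<theta>\<bar> * \<gamma> powr (\<alpha> - 1)"
    using powr_inv_cancel[OF wa] unfolding ya_def by (simp only: add_diff_cancel_left')
  have eb: "(yb - \<gamma>) powr (\<alpha> - 1) = q / (\<alpha> * (1 + \<bar>\<theta>\<bar>))"
    using powr_inv_cancel[OF wb] unfolding yb_def by (simp only: add_diff_cancel_left')
  have "ya powr (\<alpha> - 1) \<le> \<gamma> powr (\<alpha> - 1)"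
    using powr_mono2'[of "\<alpha> - 1" \<gamma> ya] a1 g0 ya by simp
  then have "\<bar>\<theta>\<bar> * ya powr (\<alpha> - 1) \<le> \<bar>\<theta>\<bar> * \<gamma> powr (\<alpha> - 1)"
    by (intro mult_left_mono) simp_all
  moreover have "- (\<bar>\<theta>\<bar> * ya powr (\<alpha> - 1)) \<le> \<theta> * ya powr (\<alpha> - 1)"
  proof -
    have "- \<bar>\<theta>\<bar> * ya powr (\<alpha> - 1) \<le> \<theta> * ya powr (\<alpha> - 1)"
      by (intro mult_right_mono) simp_all
    then show ?thesis by simp
  qed
  ultimately have "q / \<alpha> \<le> (ya - \<gamma>) powr (\<alpha> - 1) + \<theta> * ya powr (\<alpha> - 1)"
    using ea by linarith
  then have ha: "q \<le> h2 \<theta> ya"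
    unfolding h2_def using a0 by (simp add: divide_le_eq mult.commute)
  have "yb powr (\<alpha> - 1) \<le> (yb - \<gamma>) powr (\<alpha> - 1)"
    using powr_mono2'[of "\<alpha> - 1" "yb - \<gamma>" yb] a1 g0 yb by simp
  then have "\<bar>\<theta>\<bar> * yb powr (\<alpha> - 1) \<le> \<bar>\<theta>\<bar> * (yb - \<gamma>) powr (\<alpha> - 1)"
    by (intro mult_left_mono) simp_all
  moreover have "\<theta> * yb powr (\<alpha> - 1) \<le> \<bar>\<theta>\<bar> * yb powr (\<alpha> - 1)"
    by (intro mult_right_mono) simp_all
  ultimately have "(yb - \<gamma>) powr (\<alpha> - 1) + \<theta> * yb powr (\<alpha> - 1) \<le> (1 + \<bar>\<theta>\<bar>) * (yb - \<gamma>) powr (\<alpha> - 1)"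
    by (simp add: distrib_right)
  also have "\<dots> = q / \<alpha>" using eb t1 a0 by simp
  finally have "(yb - \<gamma>) powr (\<alpha> - 1) + \<theta> * yb powr (\<alpha> - 1) \<le> q / \<alpha>" .
  then have hb: "h2 \<theta> yb \<le> q"
    unfolding h2_def using a0 by (simp add: le_divide_eq mult.commute)
  show ?thesis
  proof (cases "ya \<le> yb")
    case True
    have "continuous_on {ya..yb} (h2 \<theta>)"
      by (rule continuous_on_subset[OF h2_cont]) (use ya in auto)
    then obtain y where "ya \<le> y" "y \<le> yb" "h2 \<theta> y = q"
      using IVT2'[of "h2 \<theta>" yb q ya] ha hb True by blast
    then show ?thesis using ya by (intro exI[of _ y]) auto
  next
    case False
    have "continuous_on {yb..ya} (h2 \<theta>)"
      by (rule continuous_on_subset[OF h2_cont]) (use yb in auto)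
    then obtain y where "yb \<le> y" "y \<le> ya" "h2 \<theta> y = q"
      using IVT'[of "h2 \<theta>" yb q ya] ha hb False by force
    then show ?thesis using yb by (intro exI[of _ y]) auto
  qed
qed

lemma h2_unique:
  assumes "0 < q" "\<gamma> < y1" "\<gamma> < y2" "h2 \<theta> y1 = q" "h2 \<theta> y2 = q"
  shows "y1 = y2"
proof (rule ccontr)
  assume "y1 \<noteq> y2"
  then consider "y1 < y2" | "y2 < y1" by linarith
  then show False
  proof cases
    case 1 then show False using h2_mono[OF assms(2) 1, of \<theta>] assms by simp
  next
    case 2 then show False using h2_mono[OF assms(3) 2, of \<theta>] assms by simp
  qed
qed

abbreviation "J2 \<theta> q \<equiv> I2 \<alpha> \<gamma> \<theta> q"

lemma J2_spec:
  assumes "0 < q"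
  shows "\<gamma> < J2 \<theta> q \<and> h2 \<theta> (J2 \<theta> q) = q"
proof -
  have ex: "\<exists>!y. \<gamma> < y \<and> h2 \<theta> y = q"
    using h2_exists[OF assms, of \<theta>] h2_unique[OF assms] by blast
  show ?thesis
    unfolding I2_def using theI'[OF ex] unfolding h2_def by simp
qed

lemma J2_gt: "0 < q \<Longrightarrow> \<gamma> < J2 \<theta> q" and J2_h2: "0 < q \<Longrightarrow> h2 \<theta> (J2 \<theta> q) = q"
  using J2_spec by blast+

lemma J2_eq:
  assumes "0 < q" "\<gamma> < y" "h2 \<theta> y = q"
  shows "J2 \<theta> q = y"
  using h2_unique[OF assms(1) J2_gt[OF assms(1)] assms(2) J2_h2[OF assms(1)] assms(3)] .

lemma J2_decr:
  assumes "0 < q1" "q1 < q2"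
  shows "J2 \<theta> q2 < J2 \<theta> q1"
proof (rule ccontr)
  assume "\<not> ?thesis"
  then have le: "J2 \<theta> q1 \<le> J2 \<theta> q2" by simp
  have q2: "0 < q2" using assms by simp
  show False
  proof (cases "J2 \<theta> q1 = J2 \<theta> q2")
    case True then show False using J2_h2[OF assms(1), of \<theta>] J2_h2[OF q2, of \<theta>] assms by (metis less_irrefl)
  next
    case False
    then have lt: "J2 \<theta> q1 < J2 \<theta> q2" using le by simp
    have "h2 \<theta> (J2 \<theta> q2) < h2 \<theta> (J2 \<theta> q1)"
      by (rule h2_mono[OF J2_gt[OF assms(1)] lt]) (simp add: J2_h2 q2)
    then show False using J2_h2[OF assms(1), of \<theta>] J2_h2[OF q2, of \<theta>] assms by simp
  qed
qed

lemma h2_ge_on: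
  assumes "\<gamma> < y" "y \<le> y1" "0 < h2 \<theta> y1"
  shows "h2 \<theta> y1 \<le> h2 \<theta> y"
  using h2_mono'[of y y1 \<theta>] h2_mono[of y y1 \<theta>] assms by (cases "y = y1") auto

lemma h2_le_on:
  assumes "\<gamma> < y1" "y1 \<le> y" "0 < h2 \<theta> y1"
  shows "h2 \<theta> y \<le> h2 \<theta> y1"
  using h2_mono'[of y1 y \<theta>] assms by (cases "y = y1") auto

lemma J2_upper:
  assumes "0 < q" "\<theta> \<le> T" "0 \<le> T"
  shows "J2 \<theta> q \<le> \<gamma> + (q / (\<alpha> * (1 + T))) powr (1 / (\<alpha> - 1))"
proof -
  define y where "y = J2 \<theta> q"
  have y: "\<gamma> < y" "h2 \<theta> y = q" using J2_spec[OF assms(1)] unfolding y_def by auto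
  have "y powr (\<alpha> - 1) \<le> (y - \<gamma>) powr (\<alpha> - 1)"
    using powr_mono2'[of "\<alpha> - 1" "y - \<gamma>" y] a1 g0 y by simp
  then have "\<theta> * y powr (\<alpha> - 1) \<le> T * (y - \<gamma>) powr (\<alpha> - 1)"
    using assms by (meson mult_mono powr_ge_zero order.trans)
  then have "\<alpha> * (\<theta> * y powr (\<alpha> - 1)) \<le> \<alpha> * (T * (y - \<gamma>) powr (\<alpha> - 1))"
    using a0 by (intro mult_left_mono) auto
  then have "q \<le> \<alpha> * ((1 + T) * (y - \<gamma>) powr (\<alpha> - 1))"
    using y(2) unfolding h2_def by (simp add: algebra_simps)
  then have w: "q / (\<alpha> * (1 + T)) \<le> (y - \<gamma>) powr (\<alpha> - 1)"
    using a0 assms by (simp add: field_simps add_pos_nonneg)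
  have w0: "0 < q / (\<alpha> * (1 + T))" using a0 assms by (simp add: add_pos_nonneg)
  have "((y - \<gamma>) powr (\<alpha> - 1)) powr (1 / (\<alpha> - 1)) \<le> (q / (\<alpha> * (1 + T))) powr (1 / (\<alpha> - 1))"
    using powr_mono2'[OF _ w0 w, of "1 / (\<alpha> - 1)"] a1 by simp
  moreover have "((y - \<gamma>) powr (\<alpha> - 1)) powr (1 / (\<alpha> - 1)) = y - \<gamma>"
    using y a1 by (simp add: powr_powr)
  ultimately show ?thesis unfolding y_def by simp
qed

lemma h2_tendsto_theta:
  "(\<theta>f \<longlongrightarrow> \<theta>0) F \<Longrightarrow> ((\<lambda>x. h2 (\<theta>f x) y) \<longlongrightarrow> h2 \<theta>0 y) F"
  unfolding h2_def by (auto intro!: tendsto_intros)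

lemma J2_tendsto:
  assumes th: "(\<theta>f \<longlongrightarrow> \<theta>0) F" and qq: "(qf \<longlongrightarrow> q0) F" and q0: "0 < q0"
  shows "((\<lambda>x. J2 (\<theta>f x) (qf x)) \<longlongrightarrow> J2 \<theta>0 q0) F"
proof (rule order_tendstoI)
  define y0 where "y0 = J2 \<theta>0 q0"
  have y0: "\<gamma> < y0" "h2 \<theta>0 y0 = q0" using J2_spec[OF q0] unfolding y0_def by auto
  have evq: "eventually (\<lambda>x. 0 < qf x) F" using order_tendstoD(1)[OF qq q0] .
  fix a assume a: "a < J2 \<theta>0 q0"
  define a' where "a' = max a ((\<gamma> + y0) / 2)"
  have ay: "a < y0" using a unfolding y0_def .
  have "\<gamma> < (\<gamma> + y0) / 2" "(\<gamma> + y0) / 2 < y0" using y0 by auto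
  then have a': "\<gamma> < a'" "a' < y0" "a \<le> a'" using ay unfolding a'_def by (auto simp: less_max_iff_disj)
  have "q0 < h2 \<theta>0 a'" using h2_mono[OF a'(1) a'(2), of \<theta>0] y0 q0 by simp
  then have ev1: "eventually (\<lambda>x. qf x < h2 (\<theta>f x) a') F"
    using tendsto_diff[OF h2_tendsto_theta[OF th, of a'] qq]
    by (auto dest: order_tendstoD(1)[where a=0] elim: eventually_mono)
  show "eventually (\<lambda>x. a < J2 (\<theta>f x) (qf x)) F"
    using ev1 evq
  proof eventually_elim
    case (elim x)
    define y where "y = J2 (\<theta>f x) (qf x)"
    have y: "\<gamma> < y" "h2 (\<theta>f x) y = qf x" using J2_spec[OF elim(2)] unfolding y_def by auto
    have "a' < y"
    proof (rule ccontr)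
      assume "\<not> a' < y"
      then have "y \<le> a'" by simp
      have "h2 (\<theta>f x) a' \<le> h2 (\<theta>f x) y"
        by (rule h2_le_on[OF y(1) \<open>y \<le> a'\<close>]) (use y elim in simp)
      then show False using y elim by simp
    qed
    then show ?case using a' unfolding y_def by simp
  qed
next
  define y0 where "y0 = J2 \<theta>0 q0"
  have y0: "\<gamma> < y0" "h2 \<theta>0 y0 = q0" using J2_spec[OF q0] unfolding y0_def by auto
  have evq: "eventually (\<lambda>x. 0 < qf x) F" using order_tendstoD(1)[OF qq q0] .
  fix b assume b: "J2 \<theta>0 q0 < b"
  then have b': "y0 < b" unfolding y0_def .
  have "h2 \<theta>0 b < h2 \<theta>0 y0" by (rule h2_mono'[OF y0(1) b']) (simp add: y0 q0)
  then have "h2 \<theta>0 b < q0" using y0 by simp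
  then have ev1: "eventually (\<lambda>x. h2 (\<theta>f x) b < qf x) F"
    using tendsto_diff[OF qq h2_tendsto_theta[OF th, of b]]
    by (auto dest: order_tendstoD(1)[where a=0] elim: eventually_mono)
  show "eventually (\<lambda>x. J2 (\<theta>f x) (qf x) < b) F"
    using ev1 evq
  proof eventually_elim
    case (elim x)
    define y where "y = J2 (\<theta>f x) (qf x)"
    have y: "\<gamma> < y" "h2 (\<theta>f x) y = qf x" using J2_spec[OF elim(2)] unfolding y_def by auto
    have "y < b"
    proof (rule ccontr)
      assume "\<not> y < b"
      then have "b \<le> y" by simp
      have "h2 (\<theta>f x) y \<le> h2 (\<theta>f x) b"
        by (rule h2_ge_on) (use y elim \<open>b \<le> y\<close> b' y0 in auto)
      then show False using y elim by simp
    qed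
    then show ?case unfolding y_def by simp
  qed
qed

lemma U2_deriv: "\<gamma> < y \<Longrightarrow> (U2 \<theta> has_real_derivative h2 \<theta> y) (at y)"
  unfolding U2_def h2_def using g0
  by (auto intro!: derivative_eq_intros simp: algebra_simps)

lemma U2_cont: "continuous_on {\<gamma>..} (U2 \<theta>)"
  unfolding U2_def using g0 a0
  by (intro continuous_intros continuous_on_powr') auto

definition Bv :: "real \<Rightarrow> real \<Rightarrow> real" where
  "Bv \<theta> q = U2 \<theta> (J2 \<theta> q) - q * J2 \<theta> q"

lemma U2_max:
  assumes q: "0 < q" and w: "\<gamma> \<le> w"
  shows "U2 \<theta> w - q * w \<le> Bv \<theta> q"
proof -
  define y where "y = J2 \<theta> q"
  have y: "\<gamma> < y" "h2 \<theta> y = q" using J2_spec[OF q] unfolding y_def by auto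
  show ?thesis
  proof (cases "w \<le> y")
    case True
    have "q * (y - w) \<le> U2 \<theta> y - U2 \<theta> w"
    proof (rule mvt_lower[OF True])
      show "continuous_on {w..y} (U2 \<theta>)" by (rule continuous_on_subset[OF U2_cont]) (use w in auto)
      fix x assume x: "w < x" "x < y"
      show "(U2 \<theta> has_real_derivative h2 \<theta> x) (at x)" by (rule U2_deriv) (use x w in auto)
      show "q \<le> h2 \<theta> x" using h2_ge_on[of x y \<theta>] x w y q by auto
    qed
    then show ?thesis unfolding Bv_def y_def[symmetric] by (simp add: algebra_simps)
  next
    case False
    have "U2 \<theta> w - U2 \<theta> y \<le> q * (w - y)"
    proof (rule mvt_upper)
      show "y \<le> w" using False by simp
      show "continuous_on {y..w} (U2 \<theta>)" by (rule continuous_on_subset[OF U2_cont]) (use y in auto)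
      fix x assume x: "y < x" "x < w"
      show "(U2 \<theta> has_real_derivative h2 \<theta> x) (at x)" by (rule U2_deriv) (use x y in auto)
      show "h2 \<theta> x \<le> q" using h2_le_on[of y x \<theta>] x y q by auto
    qed
    then show ?thesis unfolding Bv_def y_def[symmetric] by (simp add: algebra_simps)
  qed
qed

lemma Bv_step:
  assumes "0 < q1" "q1 < q2"
  shows "Bv \<theta> q2 \<le> Bv \<theta> q1 - (q2 - q1) * J2 \<theta> q2"
proof -
  have q2: "0 < q2" using assms by simp
  have "U2 \<theta> (J2 \<theta> q2) - q1 * J2 \<theta> q2 \<le> Bv \<theta> q1"
    by (rule U2_max[OF assms(1)]) (use J2_gt[OF q2, of \<theta>] in simp)
  then show ?thesis unfolding Bv_def by (simp add: algebra_simps)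
qed

lemma Bv_decr:
  assumes "0 < q1" "q1 < q2"
  shows "Bv \<theta> q2 < Bv \<theta> q1"
proof -
  have "0 < (q2 - q1) * J2 \<theta> q2"
    using assms J2_gt[of q2 \<theta>] g0 by (intro mult_pos_pos) auto
  then show ?thesis using Bv_step[OF assms, of \<theta>] by linarith
qed

lemma powr_alpha_split: "0 < y \<Longrightarrow> y powr \<alpha> = y * y powr (\<alpha> - 1)"
  by (simp add: powr_diff)

lemma Bv_upper:
  assumes "0 \<le> T" "\<theta> \<le> T" "(1 + T) * \<gamma> powr (\<alpha> - 1) \<le> q"
  shows "Bv \<theta> q \<le> \<gamma> * ((1 + T) * \<gamma> powr (\<alpha> - 1) - q)"
proof -
  have "0 < (1 + T) * \<gamma> powr (\<alpha> - 1)" using assms(1) g0 by (intro mult_pos_pos) auto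
  then have q: "0 < q" using assms(3) by linarith
  define y where "y = J2 \<theta> q"
  have y: "\<gamma> < y" using J2_spec[OF q] unfolding y_def by auto
  have y0: "0 < y" using y g0 by simp
  have "(y - \<gamma>) powr \<alpha> \<le> y powr \<alpha>" using y g0 a0 by (intro powr_mono2) auto
  moreover have "\<theta> * y powr \<alpha> \<le> T * y powr \<alpha>" using assms by (intro mult_right_mono) auto
  ultimately have "U2 \<theta> y \<le> (1 + T) * y powr \<alpha>" unfolding U2_def by (simp add: distrib_right)
  also have "\<dots> = y * ((1 + T) * y powr (\<alpha> - 1))" using powr_alpha_split[OF y0] by simp
  also have "\<dots> \<le> y * ((1 + T) * \<gamma> powr (\<alpha> - 1))"
  proof -
    have "y powr (\<alpha> - 1) \<le> \<gamma> powr (\<alpha> - 1)" using powr_mono2'[of "\<alpha> - 1" \<gamma> y] a1 g0 y by simp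
    then show ?thesis using y0 assms by (intro mult_left_mono) auto
  qed
  finally have "Bv \<theta> q \<le> y * ((1 + T) * \<gamma> powr (\<alpha> - 1) - q)"
    unfolding Bv_def y_def[symmetric] by (simp add: algebra_simps)
  also have "\<dots> \<le> \<gamma> * ((1 + T) * \<gamma> powr (\<alpha> - 1) - q)"
    using y assms(3) by (intro mult_right_mono_neg) auto
  finally show ?thesis .
qed

lemma Bv_tendsto:
  assumes th: "(\<theta>f \<longlongrightarrow> \<theta>0) F" and qq: "(qf \<longlongrightarrow> q0) F" and q0: "0 < q0"
  shows "((\<lambda>x. Bv (\<theta>f x) (qf x)) \<longlongrightarrow> Bv \<theta>0 q0) F"
proof -
  have J: "((\<lambda>x. J2 (\<theta>f x) (qf x)) \<longlongrightarrow> J2 \<theta>0 q0) F" by (rule J2_tendsto[OF th qq q0])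
  have g: "J2 \<theta>0 q0 - \<gamma> \<noteq> 0" "J2 \<theta>0 q0 \<noteq> 0" using J2_gt[OF q0, of \<theta>0] g0 by auto
  have J1: "((\<lambda>x. J2 (\<theta>f x) (qf x) - \<gamma>) \<longlongrightarrow> J2 \<theta>0 q0 - \<gamma>) F"
    by (intro tendsto_diff J tendsto_const)
  have P1: "((\<lambda>x. (J2 (\<theta>f x) (qf x) - \<gamma>) powr \<alpha>) \<longlongrightarrow> (J2 \<theta>0 q0 - \<gamma>) powr \<alpha>) F"
    by (rule tendsto_powr[OF J1 tendsto_const g(1)])
  have P2: "((\<lambda>x. J2 (\<theta>f x) (qf x) powr \<alpha>) \<longlongrightarrow> J2 \<theta>0 q0 powr \<alpha>) F"
    by (rule tendsto_powr[OF J tendsto_const g(2)])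
  show ?thesis unfolding Bv_def U2_def
    by (intro tendsto_diff tendsto_add tendsto_mult P1 P2 th qq J)
qed

lemma Bv_ge_gamma: "0 < q \<Longrightarrow> U2 \<theta> \<gamma> - q * \<gamma> \<le> Bv \<theta> q"
  by (rule U2_max) auto

lemma U2_gamma: "U2 \<theta> \<gamma> = \<theta> * \<gamma> powr \<alpha>"
  unfolding U2_def by simp

end

context prm
begin

definition h1 :: "real \<Rightarrow> real \<Rightarrow> real" where
  "h1 \<theta> y = \<alpha> * (k * (\<gamma> - y) powr (\<alpha> - 1) + \<theta> * y powr (\<alpha> - 1))"

definition U1 :: "real \<Rightarrow> real \<Rightarrow> real" where
  "U1 \<theta> y = - k * (\<gamma> - y) powr \<alpha> + \<theta> * y powr \<alpha>"

definition yt :: "real \<Rightarrow> real" where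
  "yt \<theta> = c_tilde \<alpha> k \<theta> * \<gamma>"

definition nt :: "real \<Rightarrow> real" where
  "nt \<theta> = h1 \<theta> (yt \<theta>)"

abbreviation "J1 \<theta> q \<equiv> I1 \<alpha> k \<gamma> \<theta> q"

lemma ct_bounds:
  assumes "0 < \<theta>"
  shows "0 < c_tilde \<alpha> k \<theta>" "c_tilde \<alpha> k \<theta> \<le> 1" "0 < k \<Longrightarrow> c_tilde \<alpha> k \<theta> < 1"
    "k = 0 \<Longrightarrow> c_tilde \<alpha> k \<theta> = 1"
proof -
  define X where "X = (k / \<theta>) powr (1 / (2 - \<alpha>))"
  have X0: "0 \<le> X" unfolding X_def by simp
  have ct: "c_tilde \<alpha> k \<theta> = 1 / (1 + X)" unfolding c_tilde_def X_def by simp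
  show "0 < c_tilde \<alpha> k \<theta>" using X0 ct by simp
  show "c_tilde \<alpha> k \<theta> \<le> 1" using X0 ct by simp
  show "0 < k \<Longrightarrow> c_tilde \<alpha> k \<theta> < 1"
  proof -
    assume k: "0 < k"
    have "0 < X" unfolding X_def using k assms by simp
    then show ?thesis using ct by simp
  qed
  show "k = 0 \<Longrightarrow> c_tilde \<alpha> k \<theta> = 1" using ct unfolding X_def by simp
qed

lemma yt_bounds:
  assumes "0 < \<theta>"
  shows "0 < yt \<theta>" "yt \<theta> \<le> \<gamma>" "0 < k \<Longrightarrow> yt \<theta> < \<gamma>" "k = 0 \<Longrightarrow> yt \<theta> = \<gamma>"
  using ct_bounds[OF assms] g0 unfolding yt_def by (auto simp: mult_le_cancel_right1)

lemma yt_formula: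
  assumes "0 < \<theta>"
  shows "yt \<theta> * (1 + (k / \<theta>) powr (1 / (2 - \<alpha>))) = \<gamma>"
proof -
  have "0 < 1 + (k / \<theta>) powr (1 / (2 - \<alpha>))"
    by (metis add_pos_nonneg powr_ge_zero zero_less_one)
  then show ?thesis unfolding yt_def c_tilde_def by simp
qed

lemma kth_powr:
  assumes "0 < \<theta>" "0 < k"
  shows "((k / \<theta>) powr (1 / (2 - \<alpha>))) powr (2 - \<alpha>) = k / \<theta>"
  using assms a1 by (simp add: powr_powr)

lemma h1_dneg:
  assumes th: "0 < \<theta>" and y: "0 < y" "y < yt \<theta>"
  shows "k * (\<gamma> - y) powr (\<alpha> - 2) < \<theta> * y powr (\<alpha> - 2)"
proof (cases "k = 0")
  case True
  then show ?thesis using th y by simp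
next
  case False
  then have k: "0 < k" using k0 by simp
  have ylt: "y < \<gamma>" using y yt_bounds[OF th] by simp
  define X where "X = (k / \<theta>) powr (1 / (2 - \<alpha>))"
  have X0: "0 \<le> X" unfolding X_def by simp
  have "y * (1 + X) < yt \<theta> * (1 + X)" using y X0 by (intro mult_strict_right_mono) auto
  then have "y * (1 + X) < \<gamma>" using yt_formula[OF th] unfolding X_def by simp
  then have "X < (\<gamma> - y) / y" using y by (simp add: field_simps)
  then have "X powr (2 - \<alpha>) < ((\<gamma> - y) / y) powr (2 - \<alpha>)"
    using X0 a1 by (intro powr_less_mono2) auto
  then have "k / \<theta> < (\<gamma> - y) powr (2 - \<alpha>) / y powr (2 - \<alpha>)"
    using kth_powr[OF th k] unfolding X_def by (simp add: powr_divide)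
  then have ineq: "k * y powr (2 - \<alpha>) < \<theta> * (\<gamma> - y) powr (2 - \<alpha>)"
    using th y by (simp add: field_simps)
  have e1: "(\<gamma> - y) powr (\<alpha> - 2) = 1 / (\<gamma> - y) powr (2 - \<alpha>)"
    using powr_minus_divide[of "\<gamma> - y" "2 - \<alpha>"] by simp
  have e2: "y powr (\<alpha> - 2) = 1 / y powr (2 - \<alpha>)"
    using powr_minus_divide[of y "2 - \<alpha>"] by simp
  have p1: "0 < (\<gamma> - y) powr (2 - \<alpha>)" using ylt by simp
  have p2: "0 < y powr (2 - \<alpha>)" using y by simp
  show ?thesis unfolding e1 e2 using ineq p1 p2 by (simp add: field_simps)
qed

lemma h1_dpos:
  assumes th: "0 < \<theta>" and k: "0 < k" and y: "yt \<theta> < y" "y < \<gamma>"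
  shows "\<theta> * y powr (\<alpha> - 2) < k * (\<gamma> - y) powr (\<alpha> - 2)"
proof -
  have y0: "0 < y" using y yt_bounds[OF th] by simp
  define X where "X = (k / \<theta>) powr (1 / (2 - \<alpha>))"
  have X0: "0 \<le> X" unfolding X_def by simp
  have "yt \<theta> * (1 + X) < y * (1 + X)" using y X0 by (intro mult_strict_right_mono) auto
  then have "\<gamma> < y * (1 + X)" using yt_formula[OF th] unfolding X_def by simp
  then have "(\<gamma> - y) / y < X" using y0 by (simp add: field_simps)
  then have "((\<gamma> - y) / y) powr (2 - \<alpha>) < X powr (2 - \<alpha>)"
    using y y0 a1 by (intro powr_less_mono2) auto
  then have "(\<gamma> - y) powr (2 - \<alpha>) / y powr (2 - \<alpha>) < k / \<theta>"
    using kth_powr[OF th k] unfolding X_def by (simp add: powr_divide)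
  then have ineq: "\<theta> * (\<gamma> - y) powr (2 - \<alpha>) < k * y powr (2 - \<alpha>)"
    using th y0 by (simp add: field_simps)
  have e1: "(\<gamma> - y) powr (\<alpha> - 2) = 1 / (\<gamma> - y) powr (2 - \<alpha>)"
    using powr_minus_divide[of "\<gamma> - y" "2 - \<alpha>"] by simp
  have e2: "y powr (\<alpha> - 2) = 1 / y powr (2 - \<alpha>)"
    using powr_minus_divide[of y "2 - \<alpha>"] by simp
  have p1: "0 < (\<gamma> - y) powr (2 - \<alpha>)" using y by simp
  have p2: "0 < y powr (2 - \<alpha>)" using y0 by simp
  show ?thesis unfolding e1 e2 using ineq p1 p2 by (simp add: field_simps)
qed

lemma h1_deriv:
  assumes "0 < y" "y < \<gamma>"
  shows "(h1 \<theta> has_real_derivative \<alpha> * (\<alpha> - 1) * (\<theta> * y powr (\<alpha> - 2) - k * (\<gamma> - y) powr (\<alpha> - 2))) (at y)"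
proof -
  have d1: "((\<lambda>y. \<gamma> - y) has_real_derivative -1) (at y)"
    using DERIV_diff[OF DERIV_const[of \<gamma>] DERIV_ident] by simp
  have d2: "((\<lambda>y. (\<gamma> - y) powr (\<alpha> - 1)) has_real_derivative (\<alpha> - 1) * (\<gamma> - y) powr (\<alpha> - 1 - 1) * (- 1)) (at y)"
    using DERIV_fun_powr[OF d1, of "\<alpha> - 1"] assms by simp
  have d3: "((\<lambda>y. y powr (\<alpha> - 1)) has_real_derivative (\<alpha> - 1) * y powr (\<alpha> - 1 - 1)) (at y)"
    using has_real_derivative_powr[of y "\<alpha> - 1"] assms by simp
  have "(h1 \<theta> has_real_derivative \<alpha> * (k * ((\<alpha> - 1) * (\<gamma> - y) powr (\<alpha> - 1 - 1) * (- 1)) + \<theta> * ((\<alpha> - 1) * y powr (\<alpha> - 1 - 1)))) (at y)"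
    unfolding h1_def by (intro DERIV_cmult DERIV_add d2 d3)
  moreover have "\<alpha> - 1 - 1 = \<alpha> - 2" by simp
  ultimately show ?thesis by (simp add: algebra_simps)
qed

lemma U1_deriv:
  assumes "0 < y" "y < \<gamma>"
  shows "(U1 \<theta> has_real_derivative h1 \<theta> y) (at y)"
  unfolding U1_def h1_def using assms
  by (auto intro!: derivative_eq_intros simp: algebra_simps)

lemma h1_cont_open: "continuous_on {0<..<\<gamma>} (h1 \<theta>)"
  unfolding h1_def by (intro continuous_intros) auto

lemma h1_cont:
  assumes th: "0 < \<theta>" and "0 < a" "b \<le> yt \<theta>"
  shows "continuous_on {a..b} (h1 \<theta>)"
proof (cases "k = 0")
  case True
  have "continuous_on {a..b} (\<lambda>y. \<alpha> * (\<theta> * y powr (\<alpha> - 1)))"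
    using assms by (intro continuous_intros) auto
  moreover have "h1 \<theta> = (\<lambda>y. \<alpha> * (\<theta> * y powr (\<alpha> - 1)))" using True unfolding h1_def by auto
  ultimately show ?thesis by simp
next
  case False
  then have "yt \<theta> < \<gamma>" using yt_bounds[OF th] k0 by simp
  then show ?thesis using assms by (intro continuous_on_subset[OF h1_cont_open]) auto
qed

lemma U1_cont: "continuous_on {0<..\<gamma>} (U1 \<theta>)"
  unfolding U1_def using a0 by (intro continuous_intros continuous_on_powr') auto

lemma h1_decr:
  assumes th: "0 < \<theta>" and y: "0 < y1" "y1 < y2" "y2 \<le> yt \<theta>"
  shows "h1 \<theta> y2 < h1 \<theta> y1"
proof (rule DERIV_neg_imp_decreasing_open[OF y(2)])
  fix x assume x: "y1 < x" "x < y2"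
  have xg: "x < \<gamma>" using x y yt_bounds[OF th] by simp
  have "k * (\<gamma> - x) powr (\<alpha> - 2) < \<theta> * x powr (\<alpha> - 2)"
    by (rule h1_dneg) (use th x y in auto)
  then have d: "0 < \<theta> * x powr (\<alpha> - 2) - k * (\<gamma> - x) powr (\<alpha> - 2)" by simp
  have n: "\<alpha> * (\<alpha> - 1) < 0" using a0 a1 by (simp add: mult_pos_neg)
  have "\<alpha> * (\<alpha> - 1) * (\<theta> * x powr (\<alpha> - 2) - k * (\<gamma> - x) powr (\<alpha> - 2)) < 0"
    using mult_neg_pos[OF n d] .
  then show "\<exists>d. (h1 \<theta> has_real_derivative d) (at x) \<and> d < 0"
    using h1_deriv[of x \<theta>] x y xg by auto
next
  show "continuous_on {y1..y2} (h1 \<theta>)" by (rule h1_cont) (use th y in auto)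
qed

lemma h1_incr:
  assumes th: "0 < \<theta>" and k: "0 < k" and y: "yt \<theta> \<le> y1" "y1 < y2" "y2 < \<gamma>"
  shows "h1 \<theta> y1 < h1 \<theta> y2"
proof (rule DERIV_pos_imp_increasing_open[OF y(2)])
  fix x assume x: "y1 < x" "x < y2"
  have x0: "0 < x" using x y yt_bounds[OF th] by simp
  have "\<theta> * x powr (\<alpha> - 2) < k * (\<gamma> - x) powr (\<alpha> - 2)"
    by (rule h1_dpos) (use th k x y in auto)
  then have d: "\<theta> * x powr (\<alpha> - 2) - k * (\<gamma> - x) powr (\<alpha> - 2) < 0" by simp
  have n: "\<alpha> * (\<alpha> - 1) < 0" using a0 a1 by (simp add: mult_pos_neg)
  have "0 < \<alpha> * (\<alpha> - 1) * (\<theta> * x powr (\<alpha> - 2) - k * (\<gamma> - x) powr (\<alpha> - 2))"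
    using mult_neg_neg[OF n d] .
  then show "\<exists>d. (h1 \<theta> has_real_derivative d) (at x) \<and> 0 < d"
    using h1_deriv[of x \<theta>] x y x0 by auto
next
  have "0 < y1" using y yt_bounds[OF th] by simp
  then show "continuous_on {y1..y2} (h1 \<theta>)"
    using y by (intro continuous_on_subset[OF h1_cont_open]) auto
qed

lemma h1_pos:
  assumes "0 < \<theta>" "0 < y"
  shows "0 < h1 \<theta> y"
proof -
  have "0 \<le> k * (\<gamma> - y) powr (\<alpha> - 1)" using k0 by simp
  moreover have "0 < \<theta> * y powr (\<alpha> - 1)" using assms by simp
  ultimately show ?thesis unfolding h1_def using a0 by simp
qed

end

context prm
begin

lemma nt_pos: "0 < \<theta> \<Longrightarrow> 0 < nt \<theta>"
  unfolding nt_def using h1_pos yt_bounds by simp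

lemma nt_le:
  assumes "0 < \<theta>" "0 < y" "y \<le> yt \<theta>"
  shows "nt \<theta> \<le> h1 \<theta> y"
  using h1_decr[OF assms(1,2), of "yt \<theta>"] assms unfolding nt_def
  by (cases "y = yt \<theta>") auto

lemma nt_less:
  assumes "0 < \<theta>" "0 < y" "y < yt \<theta>"
  shows "nt \<theta> < h1 \<theta> y"
  using h1_decr[OF assms(1,2), of "yt \<theta>"] assms unfolding nt_def by auto

lemma h1_exists:
  assumes th: "0 < \<theta>" and q: "nt \<theta> \<le> q"
  shows "\<exists>y. 0 < y \<and> y \<le> yt \<theta> \<and> h1 \<theta> y = q"
proof -
  have q0: "0 < q" using nt_pos[OF th] q by simp
  define w where "w = (q / (\<alpha> * \<theta>)) powr (1 / (\<alpha> - 1))"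
  have w0: "0 < q / (\<alpha> * \<theta>)" using q0 a0 th by simp
  have w: "0 < w" unfolding w_def using w0 by (metis powr_gt_zero less_irrefl)
  define ys where "ys = min (yt \<theta>) w"
  have ys: "0 < ys" "ys \<le> yt \<theta>" "ys \<le> w" unfolding ys_def using w yt_bounds[OF th] by auto
  have "w powr (\<alpha> - 1) \<le> ys powr (\<alpha> - 1)"
    using powr_mono2'[of "\<alpha> - 1" ys w] a1 ys by simp
  moreover have "w powr (\<alpha> - 1) = q / (\<alpha> * \<theta>)"
    unfolding w_def by (rule powr_inv_cancel[OF w0])
  ultimately have "q / (\<alpha> * \<theta>) \<le> ys powr (\<alpha> - 1)" by simp
  then have "q \<le> \<alpha> * (\<theta> * ys powr (\<alpha> - 1))" using a0 th by (simp add: field_simps)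
  moreover have "0 \<le> \<alpha> * (k * (\<gamma> - ys) powr (\<alpha> - 1))" using a0 k0 by simp
  ultimately have ha: "q \<le> h1 \<theta> ys" unfolding h1_def by (simp add: distrib_left)
  have hb: "h1 \<theta> (yt \<theta>) \<le> q" using q unfolding nt_def .
  obtain y where "ys \<le> y" "y \<le> yt \<theta>" "h1 \<theta> y = q"
    using IVT2'[of "h1 \<theta>" "yt \<theta>" q ys] ha hb ys h1_cont[OF th ys(1) order.refl] by blast
  then show ?thesis using ys by (intro exI[of _ y]) auto
qed

lemma h1_unique:
  assumes th: "0 < \<theta>" and "0 < y1" "y1 \<le> yt \<theta>" "0 < y2" "y2 \<le> yt \<theta>" "h1 \<theta> y1 = h1 \<theta> y2"
  shows "y1 = y2"
proof (rule ccontr)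
  assume "y1 \<noteq> y2"
  then consider "y1 < y2" | "y2 < y1" by linarith
  then show False
  proof cases
    case 1 then show False using h1_decr[OF th assms(2) 1 assms(5)] assms by simp
  next
    case 2 then show False using h1_decr[OF th assms(4) 2 assms(3)] assms by simp
  qed
qed

lemma J1_spec:
  assumes th: "0 < \<theta>" and q: "nt \<theta> \<le> q"
  shows "0 < J1 \<theta> q \<and> J1 \<theta> q \<le> yt \<theta> \<and> h1 \<theta> (J1 \<theta> q) = q"
proof -
  have ex: "\<exists>!y. 0 < y \<and> y \<le> yt \<theta> \<and> h1 \<theta> y = q"
    using h1_exists[OF th q] h1_unique[OF th] by blast
  show ?thesis
    unfolding I1_def using theI'[OF ex] unfolding h1_def yt_def by simp
qed

lemma J1_eq:
  assumes th: "0 < \<theta>" and y: "0 < y" "y \<le> yt \<theta>" "h1 \<theta> y = q"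
  shows "J1 \<theta> q = y"
proof -
  have q: "nt \<theta> \<le> q" using nt_le[OF th y(1,2)] y by simp
  show ?thesis using J1_spec[OF th q] h1_unique[OF th, of "J1 \<theta> q" y] y by auto
qed

lemma J1_lt:
  assumes th: "0 < \<theta>" and q: "nt \<theta> < q"
  shows "J1 \<theta> q < yt \<theta>"
proof -
  have s: "J1 \<theta> q \<le> yt \<theta>" "h1 \<theta> (J1 \<theta> q) = q" using J1_spec[OF th] q by auto
  show ?thesis
  proof (rule ccontr)
    assume "\<not> ?thesis"
    then have "J1 \<theta> q = yt \<theta>" using s by simp
    then show False using s q unfolding nt_def by simp
  qed
qed

lemma J1_decr:
  assumes th: "0 < \<theta>" and q: "nt \<theta> \<le> q1" "q1 < q2"
  shows "J1 \<theta> q2 < J1 \<theta> q1"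
proof (rule ccontr)
  have q2: "nt \<theta> \<le> q2" using q by simp
  assume "\<not> ?thesis"
  then have le: "J1 \<theta> q1 \<le> J1 \<theta> q2" by simp
  show False
  proof (cases "J1 \<theta> q1 = J1 \<theta> q2")
    case True then show False using J1_spec[OF th q(1)] J1_spec[OF th q2] q by (metis less_irrefl)
  next
    case False
    then have lt: "J1 \<theta> q1 < J1 \<theta> q2" using le by simp
    have "h1 \<theta> (J1 \<theta> q2) < h1 \<theta> (J1 \<theta> q1)"
      by (rule h1_decr[OF th _ lt]) (use J1_spec[OF th q(1)] J1_spec[OF th q2] in auto)
    then show False using J1_spec[OF th q(1)] J1_spec[OF th q2] q by simp
  qed
qed

lemma yt_tendsto:
  assumes th: "(\<theta>f \<longlongrightarrow> \<theta>0) F" and t0: "0 < \<theta>0"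
  shows "((\<lambda>x. yt (\<theta>f x)) \<longlongrightarrow> yt \<theta>0) F"
proof (cases "k = 0")
  case True
  then have "\<And>t. yt t = \<gamma>" unfolding yt_def c_tilde_def by simp
  then show ?thesis by simp
next
  case False
  then have k: "0 < k" using k0 by simp
  have l1: "((\<lambda>x. k / \<theta>f x) \<longlongrightarrow> k / \<theta>0) F" using t0 by (intro tendsto_divide tendsto_const th) auto
  have l2: "((\<lambda>x. (k / \<theta>f x) powr (1 / (2 - \<alpha>))) \<longlongrightarrow> (k / \<theta>0) powr (1 / (2 - \<alpha>))) F"
    by (rule tendsto_powr[OF l1 tendsto_const]) (use k t0 in simp)
  have nz: "1 + (k / \<theta>0) powr (1 / (2 - \<alpha>)) \<noteq> 0"
    by (metis add_pos_nonneg powr_ge_zero zero_less_one less_irrefl)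
  show ?thesis unfolding yt_def c_tilde_def
    by (intro tendsto_mult tendsto_divide tendsto_add tendsto_const l2 nz)
qed

lemma h1_tendsto_theta:
  "(\<theta>f \<longlongrightarrow> \<theta>0) F \<Longrightarrow> ((\<lambda>x. h1 (\<theta>f x) y) \<longlongrightarrow> h1 \<theta>0 y) F"
  unfolding h1_def by (intro tendsto_mult tendsto_add tendsto_const)

lemma J1_tendsto:
  assumes th: "(\<theta>f \<longlongrightarrow> \<theta>0) F" and qq: "(qf \<longlongrightarrow> q0) F" and t0: "0 < \<theta>0"
    and q0: "nt \<theta>0 \<le> q0" and ev: "eventually (\<lambda>x. 0 < \<theta>f x \<and> nt (\<theta>f x) \<le> qf x) F"
  shows "((\<lambda>x. J1 (\<theta>f x) (qf x)) \<longlongrightarrow> J1 \<theta>0 q0) F"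
proof (rule order_tendstoI)
  define y0 where "y0 = J1 \<theta>0 q0"
  have y0: "0 < y0" "y0 \<le> yt \<theta>0" "h1 \<theta>0 y0 = q0" using J1_spec[OF t0 q0] unfolding y0_def by auto
  fix a assume a: "a < J1 \<theta>0 q0"
  define a' where "a' = max a (y0 / 2)"
  have ay: "a < y0" using a unfolding y0_def .
  have "0 < y0 / 2" "y0 / 2 < y0" using y0 by auto
  then have a': "0 < a'" "a' < y0" "a \<le> a'" using ay unfolding a'_def by (auto simp: less_max_iff_disj)
  have "h1 \<theta>0 y0 < h1 \<theta>0 a'" by (rule h1_decr[OF t0 a'(1) a'(2) y0(2)])
  then have "q0 < h1 \<theta>0 a'" using y0 by simp
  then have ev1: "eventually (\<lambda>x. qf x < h1 (\<theta>f x) a') F"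
    using tendsto_diff[OF h1_tendsto_theta[OF th, of a'] qq]
    by (auto dest: order_tendstoD(1)[where a=0] elim: eventually_mono)
  have ev2: "eventually (\<lambda>x. a' < yt (\<theta>f x)) F"
    using order_tendstoD(1)[OF yt_tendsto[OF th t0], of a'] a' y0 by simp
  show "eventually (\<lambda>x. a < J1 (\<theta>f x) (qf x)) F"
    using ev1 ev2 ev
  proof eventually_elim
    case (elim x)
    define y where "y = J1 (\<theta>f x) (qf x)"
    have y: "0 < y" "y \<le> yt (\<theta>f x)" "h1 (\<theta>f x) y = qf x"
      using J1_spec[of "\<theta>f x" "qf x"] elim unfolding y_def by auto
    have "a' < y"
    proof (rule ccontr)
      assume "\<not> a' < y"
      then consider "y = a'" | "y < a'" by linarith
      then show False
      proof cases
        case 1 then show False using y elim by simp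
      next
        case 2
        have "h1 (\<theta>f x) a' < h1 (\<theta>f x) y"
          by (rule h1_decr) (use elim y 2 in auto)
        then show False using y elim by simp
      qed
    qed
    then show ?case using a' unfolding y_def by simp
  qed
next
  define y0 where "y0 = J1 \<theta>0 q0"
  have y0: "0 < y0" "y0 \<le> yt \<theta>0" "h1 \<theta>0 y0 = q0" using J1_spec[OF t0 q0] unfolding y0_def by auto
  fix b assume b: "J1 \<theta>0 q0 < b"
  then have by0: "y0 < b" unfolding y0_def .
  show "eventually (\<lambda>x. J1 (\<theta>f x) (qf x) < b) F"
  proof (cases "y0 < yt \<theta>0")
    case True
    define b' where "b' = min b ((y0 + yt \<theta>0) / 2)"
    have "y0 < (y0 + yt \<theta>0) / 2" "(y0 + yt \<theta>0) / 2 < yt \<theta>0" using True by auto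
    then have b': "y0 < b'" "b' < yt \<theta>0" "b' \<le> b" using by0 unfolding b'_def by (auto simp: min_less_iff_disj)
    have "h1 \<theta>0 b' < h1 \<theta>0 y0" by (rule h1_decr[OF t0 y0(1) b'(1)]) (use b' in simp)
    then have "h1 \<theta>0 b' < q0" using y0 by simp
    then have ev1: "eventually (\<lambda>x. h1 (\<theta>f x) b' < qf x) F"
      using tendsto_diff[OF qq h1_tendsto_theta[OF th, of b']]
      by (auto dest: order_tendstoD(1)[where a=0] elim: eventually_mono)
    have ev2: "eventually (\<lambda>x. b' < yt (\<theta>f x)) F"
      using order_tendstoD(1)[OF yt_tendsto[OF th t0], of b'] b' by simp
    show ?thesis using ev1 ev2 ev
    proof eventually_elim
      case (elim x)
      define y where "y = J1 (\<theta>f x) (qf x)"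
      have y: "0 < y" "y \<le> yt (\<theta>f x)" "h1 (\<theta>f x) y = qf x"
        using J1_spec[of "\<theta>f x" "qf x"] elim unfolding y_def by auto
      have "y < b'"
      proof (rule ccontr)
        assume "\<not> y < b'"
        then consider "y = b'" | "b' < y" by linarith
        then show False
        proof cases
          case 1 then show False using y elim by simp
        next
          case 2
          have "h1 (\<theta>f x) y < h1 (\<theta>f x) b'"
            by (rule h1_decr) (use elim y 2 y0 b' in auto)
          then show False using y elim by simp
        qed
      qed
      then show ?case using b' unfolding y_def by simp
    qed
  next
    case False
    then have "y0 = yt \<theta>0" using y0 by simp
    then have ev2: "eventually (\<lambda>x. yt (\<theta>f x) < b) F"
      using order_tendstoD(2)[OF yt_tendsto[OF th t0], of b] by0 by simp
    show ?thesis using ev2 ev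
    proof eventually_elim
      case (elim x)
      then show ?case using J1_spec[of "\<theta>f x" "qf x"] by auto
    qed
  qed
qed

lemma nt_ev:
  assumes th: "(\<theta>f \<longlongrightarrow> \<theta>0) F" and qq: "(qf \<longlongrightarrow> q0) F" and t0: "0 < \<theta>0"
    and q0: "nt \<theta>0 < q0"
  shows "eventually (\<lambda>x. 0 < \<theta>f x \<and> nt (\<theta>f x) < qf x) F"
proof -
  define y0 where "y0 = J1 \<theta>0 q0"
  have y0: "0 < y0" "y0 < yt \<theta>0" "h1 \<theta>0 y0 = q0"
    using J1_spec[OF t0] J1_lt[OF t0 q0] q0 unfolding y0_def by auto
  define b' where "b' = (y0 + yt \<theta>0) / 2"
  have b': "y0 < b'" "b' < yt \<theta>0" using y0 unfolding b'_def by auto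
  have "h1 \<theta>0 b' < h1 \<theta>0 y0" by (rule h1_decr[OF t0 y0(1) b'(1)]) (use b' in simp)
  then have "h1 \<theta>0 b' < q0" using y0 by simp
  then have ev1: "eventually (\<lambda>x. h1 (\<theta>f x) b' < qf x) F"
    using tendsto_diff[OF qq h1_tendsto_theta[OF th, of b']]
    by (auto dest: order_tendstoD(1)[where a=0] elim: eventually_mono)
  have ev2: "eventually (\<lambda>x. b' < yt (\<theta>f x)) F"
    using order_tendstoD(1)[OF yt_tendsto[OF th t0], of b'] b' by simp
  have ev3: "eventually (\<lambda>x. 0 < \<theta>f x) F" using order_tendstoD(1)[OF th t0] .
  show ?thesis using ev1 ev2 ev3
  proof eventually_elim
    case (elim x)
    have "nt (\<theta>f x) \<le> h1 (\<theta>f x) b'" by (rule nt_le) (use elim y0 b' in auto)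
    then show ?case using elim by simp
  qed
qed

end

context prm
begin

definition Av :: "real \<Rightarrow> real \<Rightarrow> real" where
  "Av \<theta> q = U1 \<theta> (J1 \<theta> q) - q * J1 \<theta> q"

definition D :: "real \<Rightarrow> real \<Rightarrow> real" where
  "D \<theta> q = Av \<theta> q - Bv \<theta> q"

lemma Av_step:
  assumes th: "0 < \<theta>" and q: "nt \<theta> \<le> q1" "q1 < q2"
  shows "Av \<theta> q1 - (q2 - q1) * J1 \<theta> q1 \<le> Av \<theta> q2"
proof -
  have q2: "nt \<theta> \<le> q2" using q by simp
  define x1 where "x1 = J1 \<theta> q1"
  define x2 where "x2 = J1 \<theta> q2"
  have x1: "0 < x1" "x1 \<le> yt \<theta>" "h1 \<theta> x1 = q1" using J1_spec[OF th q(1)] unfolding x1_def by auto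
  have x2: "0 < x2" "x2 \<le> yt \<theta>" "h1 \<theta> x2 = q2" using J1_spec[OF th q2] unfolding x2_def by auto
  have lt: "x2 < x1" using J1_decr[OF th q] unfolding x1_def x2_def .
  have ytg: "yt \<theta> \<le> \<gamma>" using yt_bounds[OF th] by simp
  have "U1 \<theta> x1 - U1 \<theta> x2 \<le> q2 * (x1 - x2)"
  proof (rule mvt_upper)
    show "x2 \<le> x1" using lt by simp
    show "continuous_on {x2..x1} (U1 \<theta>)"
      by (rule continuous_on_subset[OF U1_cont]) (use x1 x2 ytg in auto)
    fix x assume x: "x2 < x" "x < x1"
    show "(U1 \<theta> has_real_derivative h1 \<theta> x) (at x)"
      by (rule U1_deriv) (use x x1 x2 ytg in auto)
    have "h1 \<theta> x < h1 \<theta> x2" by (rule h1_decr[OF th x2(1) x(1)]) (use x x1 in auto)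
    then show "h1 \<theta> x \<le> q2" using x2 by simp
  qed
  then show ?thesis unfolding Av_def x1_def[symmetric] x2_def[symmetric] by (simp add: algebra_simps)
qed

lemma D_incr:
  assumes th: "0 < \<theta>" and q: "nt \<theta> \<le> q1" "q1 < q2"
  shows "D \<theta> q1 < D \<theta> q2"
proof -
  have q10: "0 < q1" using nt_pos[OF th] q by simp
  have q2: "nt \<theta> \<le> q2" using q by simp
  have a: "Av \<theta> q1 - (q2 - q1) * J1 \<theta> q1 \<le> Av \<theta> q2" by (rule Av_step[OF th q])
  have b: "Bv \<theta> q2 \<le> Bv \<theta> q1 - (q2 - q1) * J2 \<theta> q2" by (rule Bv_step[OF q10 q(2)])
  have "J1 \<theta> q1 \<le> yt \<theta>" using J1_spec[OF th q(1)] by simp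
  moreover have "yt \<theta> \<le> \<gamma>" using yt_bounds[OF th] by simp
  moreover have "\<gamma> < J2 \<theta> q2" using J2_gt[of q2 \<theta>] q10 q by simp
  ultimately have "J1 \<theta> q1 < J2 \<theta> q2" by simp
  then have "(q2 - q1) * J1 \<theta> q1 < (q2 - q1) * J2 \<theta> q2"
    using q by (intro mult_strict_left_mono) auto
  then show ?thesis using a b unfolding D_def by linarith
qed

lemma U1_gamma: "U1 \<theta> \<gamma> = U2 \<theta> \<gamma>"
  unfolding U1_def U2_def by simp

lemma D_nt_neg:
  assumes th: "0 < \<theta>"
  shows "D \<theta> (nt \<theta>) < 0"
proof -
  define n where "n = nt \<theta>"
  have n0: "0 < n" using nt_pos[OF th] unfolding n_def .
  have J1n: "J1 \<theta> n = yt \<theta>"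
    by (rule J1_eq[OF th]) (use yt_bounds[OF th] in \<open>auto simp: n_def nt_def\<close>)
  have c1: "U1 \<theta> (yt \<theta>) - n * yt \<theta> \<le> U2 \<theta> \<gamma> - n * \<gamma>"
  proof (cases "k = 0")
    case True
    then have "yt \<theta> = \<gamma>" using yt_bounds[OF th] by simp
    then show ?thesis using U1_gamma by simp
  next
    case False
    then have k: "0 < k" using k0 by simp
    have ytg: "yt \<theta> < \<gamma>" using yt_bounds[OF th] k by simp
    have "n * (\<gamma> - yt \<theta>) \<le> U1 \<theta> \<gamma> - U1 \<theta> (yt \<theta>)"
    proof (rule mvt_lower)
      show "yt \<theta> \<le> \<gamma>" using ytg by simp
      show "continuous_on {yt \<theta>..\<gamma>} (U1 \<theta>)"
        by (rule continuous_on_subset[OF U1_cont]) (use yt_bounds[OF th] in auto)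
      fix x assume x: "yt \<theta> < x" "x < \<gamma>"
      show "(U1 \<theta> has_real_derivative h1 \<theta> x) (at x)"
        by (rule U1_deriv) (use x yt_bounds[OF th] in auto)
      have "h1 \<theta> (yt \<theta>) < h1 \<theta> x" by (rule h1_incr[OF th k order.refl x(1) x(2)])
      then show "n \<le> h1 \<theta> x" unfolding n_def nt_def by simp
    qed
    then show ?thesis using U1_gamma by (simp add: algebra_simps)
  qed
  define ys where "ys = J2 \<theta> n"
  have ys: "\<gamma> < ys" "h2 \<theta> ys = n" using J2_spec[OF n0] unfolding ys_def by auto
  have "n * (ys - \<gamma>) < U2 \<theta> ys - U2 \<theta> \<gamma>"
  proof (rule mvt_lower_strict)
    show "\<gamma> < ys" using ys by simp
    show "continuous_on {\<gamma>..ys} (U2 \<theta>)" by (rule continuous_on_subset[OF U2_cont]) auto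
    fix x assume x: "\<gamma> < x" "x < ys"
    show "(U2 \<theta> has_real_derivative h2 \<theta> x) (at x)" by (rule U2_deriv) (use x in auto)
    have "h2 \<theta> ys < h2 \<theta> x" by (rule h2_mono[OF x(1) x(2)]) (use ys n0 in simp)
    then show "n < h2 \<theta> x" using ys by simp
  qed
  then have "U2 \<theta> \<gamma> - n * \<gamma> < Bv \<theta> n" unfolding Bv_def ys_def[symmetric] by (simp add: algebra_simps)
  moreover have "Av \<theta> n = U1 \<theta> (yt \<theta>) - n * yt \<theta>" unfolding Av_def J1n ..
  ultimately have "D \<theta> n < 0" using c1 unfolding D_def by simp
  then show ?thesis unfolding n_def .
qed

lemma D_large:
  assumes th: "0 < \<theta>"
  shows "\<exists>Q. nt \<theta> \<le> Q \<and> 0 < D \<theta> Q"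
proof -
  define C where "C = \<alpha> * (k * (\<gamma> - yt \<theta>) powr (\<alpha> - 1) * \<gamma> + \<theta> * \<gamma> powr \<alpha>)"
  define Q where "Q = max (nt \<theta>) ((1 + \<theta>) * \<gamma> powr (\<alpha> - 1) + (k * \<gamma> powr \<alpha> + C + 1) / \<gamma>)"
  have Qn: "nt \<theta> \<le> Q" unfolding Q_def by simp
  define x where "x = J1 \<theta> Q"
  have x: "0 < x" "x \<le> yt \<theta>" "h1 \<theta> x = Q" using J1_spec[OF th Qn] unfolding x_def by auto
  have xg: "x \<le> \<gamma>" using x yt_bounds[OF th] by simp
  have U1x: "- k * \<gamma> powr \<alpha> \<le> U1 \<theta> x"
  proof -
    have "(\<gamma> - x) powr \<alpha> \<le> \<gamma> powr \<alpha>" using x xg a0 by (intro powr_mono2) auto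
    then have "k * (\<gamma> - x) powr \<alpha> \<le> k * \<gamma> powr \<alpha>" using k0 by (intro mult_left_mono) auto
    moreover have "0 \<le> \<theta> * x powr \<alpha>" using th by simp
    ultimately show ?thesis unfolding U1_def by simp
  qed
  have kb: "k * (\<gamma> - x) powr (\<alpha> - 1) \<le> k * (\<gamma> - yt \<theta>) powr (\<alpha> - 1)"
  proof (cases "k = 0")
    case True then show ?thesis by simp
  next
    case False
    then have "yt \<theta> < \<gamma>" using yt_bounds[OF th] k0 by simp
    then have "(\<gamma> - x) powr (\<alpha> - 1) \<le> (\<gamma> - yt \<theta>) powr (\<alpha> - 1)"
      using powr_mono2'[of "\<alpha> - 1" "\<gamma> - yt \<theta>" "\<gamma> - x"] a1 x by simp
    then show ?thesis using k0 by (intro mult_left_mono) auto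
  qed
  have "Q * x = h1 \<theta> x * x" using x(3) by simp
  also have "\<dots> = \<alpha> * (k * (\<gamma> - x) powr (\<alpha> - 1) * x + \<theta> * (x * x powr (\<alpha> - 1)))"
    unfolding h1_def by (simp add: algebra_simps)
  also have "x * x powr (\<alpha> - 1) = x powr \<alpha>" using powr_alpha_split[OF x(1)] by simp
  finally have Qx: "Q * x = \<alpha> * (k * (\<gamma> - x) powr (\<alpha> - 1) * x + \<theta> * x powr \<alpha>)" .
  have "k * (\<gamma> - x) powr (\<alpha> - 1) * x \<le> k * (\<gamma> - yt \<theta>) powr (\<alpha> - 1) * \<gamma>"
    by (rule mult_mono[OF kb xg]) (use k0 x in auto)
  moreover have "\<theta> * x powr \<alpha> \<le> \<theta> * \<gamma> powr \<alpha>"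
    using x xg a0 th by (intro mult_left_mono powr_mono2) auto
  ultimately have "Q * x \<le> C" unfolding Qx C_def using a0 by (intro mult_left_mono) auto
  then have Av: "- k * \<gamma> powr \<alpha> - C \<le> Av \<theta> Q" unfolding Av_def x_def[symmetric] using U1x by simp
  have C0: "0 \<le> C" unfolding C_def using a0 k0 th g0
    by (intro mult_nonneg_nonneg add_nonneg_nonneg) auto
  have "0 \<le> (k * \<gamma> powr \<alpha> + C + 1) / \<gamma>" using C0 k0 g0 by simp
  then have "(1 + \<theta>) * \<gamma> powr (\<alpha> - 1) \<le> Q"
    unfolding Q_def by (simp add: le_max_iff_disj)
  have Bv: "Bv \<theta> Q \<le> \<gamma> * ((1 + \<theta>) * \<gamma> powr (\<alpha> - 1) - Q)"
    by (rule Bv_upper) (use th \<open>(1 + \<theta>) * \<gamma> powr (\<alpha> - 1) \<le> Q\<close> in auto)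
  have "(1 + \<theta>) * \<gamma> powr (\<alpha> - 1) + (k * \<gamma> powr \<alpha> + C + 1) / \<gamma> \<le> Q" unfolding Q_def by simp
  then have "\<gamma> * ((1 + \<theta>) * \<gamma> powr (\<alpha> - 1) - Q) \<le> - (k * \<gamma> powr \<alpha> + C + 1)"
    using g0 by (simp add: field_simps)
  then have "0 < D \<theta> Q" using Av Bv unfolding D_def by linarith
  then show ?thesis using Qn by blast
qed

lemma D_tendsto:
  assumes th: "(\<theta>f \<longlongrightarrow> \<theta>0) F" and qq: "(qf \<longlongrightarrow> q0) F" and t0: "0 < \<theta>0"
    and q0: "nt \<theta>0 \<le> q0" and ev: "eventually (\<lambda>x. 0 < \<theta>f x \<and> nt (\<theta>f x) \<le> qf x) F"
  shows "((\<lambda>x. D (\<theta>f x) (qf x)) \<longlongrightarrow> D \<theta>0 q0) F"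
proof -
  have J: "((\<lambda>x. J1 (\<theta>f x) (qf x)) \<longlongrightarrow> J1 \<theta>0 q0) F" by (rule J1_tendsto[OF th qq t0 q0 ev])
  have y0: "0 < J1 \<theta>0 q0" using J1_spec[OF t0 q0] by simp
  have evn: "eventually (\<lambda>x. 0 \<le> \<gamma> - J1 (\<theta>f x) (qf x)) F"
    using ev
  proof eventually_elim
    case (elim x) then show ?case using J1_spec[of "\<theta>f x" "qf x"] yt_bounds[of "\<theta>f x"] by auto
  qed
  have G: "((\<lambda>x. \<gamma> - J1 (\<theta>f x) (qf x)) \<longlongrightarrow> \<gamma> - J1 \<theta>0 q0) F" by (intro tendsto_diff tendsto_const J)
  have P1: "((\<lambda>x. (\<gamma> - J1 (\<theta>f x) (qf x)) powr \<alpha>) \<longlongrightarrow> (\<gamma> - J1 \<theta>0 q0) powr \<alpha>) F"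
    by (rule tendsto_powr2[OF G tendsto_const evn a0])
  have P2: "((\<lambda>x. J1 (\<theta>f x) (qf x) powr \<alpha>) \<longlongrightarrow> J1 \<theta>0 q0 powr \<alpha>) F"
    by (rule tendsto_powr[OF J tendsto_const]) (use y0 in simp)
  have A: "((\<lambda>x. Av (\<theta>f x) (qf x)) \<longlongrightarrow> Av \<theta>0 q0) F"
    unfolding Av_def U1_def by (intro tendsto_diff tendsto_add tendsto_mult tendsto_const P1 P2 th qq J)
  have B: "((\<lambda>x. Bv (\<theta>f x) (qf x)) \<longlongrightarrow> Bv \<theta>0 q0) F"
    by (rule Bv_tendsto[OF th qq]) (use nt_pos[OF t0] q0 in simp)
  show ?thesis unfolding D_def by (intro tendsto_diff A B)
qed

lemma D_cont:
  assumes th: "0 < \<theta>"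
  shows "continuous_on {nt \<theta>..} (D \<theta>)"
  unfolding continuous_on_def
proof (intro ballI)
  fix q assume q: "q \<in> {nt \<theta>..}"
  have ev: "eventually (\<lambda>x. 0 < \<theta> \<and> nt \<theta> \<le> x) (at q within {nt \<theta>..})"
    using th by (auto simp: eventually_at_filter)
  show "(D \<theta> \<longlongrightarrow> D \<theta> q) (at q within {nt \<theta>..})"
    using D_tendsto[OF tendsto_const tendsto_ident_at th _ ev] q by simp
qed

lemma D_root_ex:
  assumes th: "0 < \<theta>"
  shows "\<exists>!q. nt \<theta> \<le> q \<and> D \<theta> q = 0"
proof -
  obtain Q where Q: "nt \<theta> \<le> Q" "0 < D \<theta> Q" using D_large[OF th] by blast
  have cont: "continuous_on {nt \<theta>..Q} (D \<theta>)"
    by (rule continuous_on_subset[OF D_cont[OF th]]) auto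
  obtain q where q: "nt \<theta> \<le> q" "q \<le> Q" "D \<theta> q = 0"
    using IVT'[of "D \<theta>" "nt \<theta>" 0 Q] D_nt_neg[OF th] Q cont by force
  show ?thesis
  proof (rule ex1I[of _ q])
    show "nt \<theta> \<le> q \<and> D \<theta> q = 0" using q by simp
    fix p assume p: "nt \<theta> \<le> p \<and> D \<theta> p = 0"
    show "p = q"
    proof (rule ccontr)
      assume "p \<noteq> q"
      then consider "p < q" | "q < p" by linarith
      then show False
      proof cases
        case 1 then show False using D_incr[OF th _ 1] p q by simp
      next
        case 2 then show False using D_incr[OF th _ 2] p q by simp
      qed
    qed
  qed
qed

definition qs :: "real \<Rightarrow> real" where
  "qs \<theta> = (THE q. nt \<theta> \<le> q \<and> D \<theta> q = 0)"

lemma qs_spec: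
  assumes th: "0 < \<theta>"
  shows "nt \<theta> < qs \<theta>" "D \<theta> (qs \<theta>) = 0"
proof -
  have s: "nt \<theta> \<le> qs \<theta> \<and> D \<theta> (qs \<theta>) = 0"
    unfolding qs_def by (rule theI'[OF D_root_ex[OF th]])
  then show "D \<theta> (qs \<theta>) = 0" by simp
  have "qs \<theta> \<noteq> nt \<theta>" using s D_nt_neg[OF th] by auto
  then show "nt \<theta> < qs \<theta>" using s by simp
qed

lemma qs_unique:
  assumes th: "0 < \<theta>" and "nt \<theta> \<le> q" "D \<theta> q = 0"
  shows "qs \<theta> = q"
proof -
  have "nt \<theta> \<le> qs \<theta> \<and> D \<theta> (qs \<theta>) = 0" using qs_spec[OF th] by simp
  then show ?thesis using D_root_ex[OF th] assms by blast
qed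

lemma qs_tendsto:
  assumes th: "(\<theta>f \<longlongrightarrow> \<theta>0) F" and t0: "0 < \<theta>0"
  shows "((\<lambda>x. qs (\<theta>f x)) \<longlongrightarrow> qs \<theta>0) F"
proof (rule order_tendstoI)
  have s0: "nt \<theta>0 < qs \<theta>0" "D \<theta>0 (qs \<theta>0) = 0" using qs_spec[OF t0] by auto
  fix a assume a: "a < qs \<theta>0"
  define a' where "a' = max a ((nt \<theta>0 + qs \<theta>0) / 2)"
  have "nt \<theta>0 < (nt \<theta>0 + qs \<theta>0) / 2" "(nt \<theta>0 + qs \<theta>0) / 2 < qs \<theta>0" using s0 by auto
  then have a': "nt \<theta>0 < a'" "a' < qs \<theta>0" "a \<le> a'" using a unfolding a'_def by (auto simp: less_max_iff_disj)
  have Da: "D \<theta>0 a' < 0" using D_incr[OF t0 _ a'(2)] a' s0 by simp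
  have ev1: "eventually (\<lambda>x. 0 < \<theta>f x \<and> nt (\<theta>f x) < a') F"
    by (rule nt_ev[OF th tendsto_const t0 a'(1)])
  then have ev1': "eventually (\<lambda>x. 0 < \<theta>f x \<and> nt (\<theta>f x) \<le> a') F" by (auto elim: eventually_mono)
  have "((\<lambda>x. D (\<theta>f x) a') \<longlongrightarrow> D \<theta>0 a') F"
    by (rule D_tendsto[OF th tendsto_const t0 _ ev1']) (use a' in simp)
  then have ev2: "eventually (\<lambda>x. D (\<theta>f x) a' < 0) F" using Da by (rule order_tendstoD(2))
  show "eventually (\<lambda>x. a < qs (\<theta>f x)) F"
    using ev1 ev2
  proof eventually_elim
    case (elim x)
    have s: "nt (\<theta>f x) < qs (\<theta>f x)" "D (\<theta>f x) (qs (\<theta>f x)) = 0" using qs_spec elim by auto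
    have "a' < qs (\<theta>f x)"
    proof (rule ccontr)
      assume "\<not> a' < qs (\<theta>f x)"
      then consider "qs (\<theta>f x) = a'" | "qs (\<theta>f x) < a'" by linarith
      then show False
      proof cases
        case 1 then show False using s elim by simp
      next
        case 2 then show False using D_incr[of "\<theta>f x" "qs (\<theta>f x)" a'] s elim by simp
      qed
    qed
    then show ?case using a' by simp
  qed
next
  have s0: "nt \<theta>0 < qs \<theta>0" "D \<theta>0 (qs \<theta>0) = 0" using qs_spec[OF t0] by auto
  fix b assume b: "qs \<theta>0 < b"
  have nb: "nt \<theta>0 < b" using s0 b by simp
  have Db: "0 < D \<theta>0 b" using D_incr[OF t0 _ b] s0 by simp
  have ev1: "eventually (\<lambda>x. 0 < \<theta>f x \<and> nt (\<theta>f x) < b) F"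
    by (rule nt_ev[OF th tendsto_const t0 nb])
  then have ev1': "eventually (\<lambda>x. 0 < \<theta>f x \<and> nt (\<theta>f x) \<le> b) F" by (auto elim: eventually_mono)
  have "((\<lambda>x. D (\<theta>f x) b) \<longlongrightarrow> D \<theta>0 b) F"
    by (rule D_tendsto[OF th tendsto_const t0 _ ev1']) (use nb in simp)
  then have ev2: "eventually (\<lambda>x. 0 < D (\<theta>f x) b) F" using Db by (rule order_tendstoD(1))
  show "eventually (\<lambda>x. qs (\<theta>f x) < b) F"
    using ev1 ev2
  proof eventually_elim
    case (elim x)
    have s: "nt (\<theta>f x) < qs (\<theta>f x)" "D (\<theta>f x) (qs (\<theta>f x)) = 0" using qs_spec elim by auto
    show ?case
    proof (rule ccontr)
      assume "\<not> qs (\<theta>f x) < b"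
      then consider "qs (\<theta>f x) = b" | "b < qs (\<theta>f x)" by linarith
      then show False
      proof cases
        case 1 then show False using s elim by simp
      next
        case 2 then show False using D_incr[of "\<theta>f x" b "qs (\<theta>f x)"] s elim by simp
      qed
    qed
  qed
qed

end

context prm
begin

lemma gpow_split: "\<gamma> powr \<alpha> = \<gamma> * \<gamma> powr (\<alpha> - 1)"
  using powr_alpha_split[OF g0] .

lemma sc_h2:
  "\<alpha> * ((y / \<gamma> - 1) powr (\<alpha> - 1) + \<theta> * (y / \<gamma>) powr (\<alpha> - 1)) = h2 \<theta> y / \<gamma> powr (\<alpha> - 1)"
proof -
  have e: "y / \<gamma> - 1 = (y - \<gamma>) / \<gamma>" using g0 by (simp add: field_simps)
  have gp: "0 < \<gamma> powr (\<alpha> - 1)" using g0 by simp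
  show ?thesis unfolding e h2_def powr_divide using gp by (simp add: field_simps)
qed

lemma sc_h1:
  "\<alpha> * (k * (1 - x / \<gamma>) powr (\<alpha> - 1) + \<theta> * (x / \<gamma>) powr (\<alpha> - 1)) = h1 \<theta> x / \<gamma> powr (\<alpha> - 1)"
proof -
  have e: "1 - x / \<gamma> = (\<gamma> - x) / \<gamma>" using g0 by (simp add: field_simps)
  have gp: "0 < \<gamma> powr (\<alpha> - 1)" using g0 by simp
  show ?thesis unfolding e h1_def powr_divide using gp by (simp add: field_simps)
qed

lemma sc_chord:
  "((y / \<gamma> - 1) powr \<alpha> + \<theta> * (y / \<gamma>) powr \<alpha> + k * (1 - x / \<gamma>) powr \<alpha> - \<theta> * (x / \<gamma>) powr \<alpha>)
     / (y / \<gamma> - x / \<gamma>) = (U2 \<theta> y - U1 \<theta> x) / (y - x) / \<gamma> powr (\<alpha> - 1)"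
proof -
  have e1: "y / \<gamma> - 1 = (y - \<gamma>) / \<gamma>" using g0 by (simp add: field_simps)
  have e2: "1 - x / \<gamma> = (\<gamma> - x) / \<gamma>" using g0 by (simp add: field_simps)
  have e3: "y / \<gamma> - x / \<gamma> = (y - x) / \<gamma>" using g0 by (simp add: field_simps)
  have num: "(y / \<gamma> - 1) powr \<alpha> + \<theta> * (y / \<gamma>) powr \<alpha> + k * (1 - x / \<gamma>) powr \<alpha> - \<theta> * (x / \<gamma>) powr \<alpha>
      = (U2 \<theta> y - U1 \<theta> x) / \<gamma> powr \<alpha>"
    unfolding e1 e2 U2_def U1_def powr_divide using g0 by (simp add: field_simps)
  have gp: "0 < \<gamma> powr (\<alpha> - 1)" using g0 by simp
  have "(U2 \<theta> y - U1 \<theta> x) / (\<gamma> * \<gamma> powr (\<alpha> - 1)) / ((y - x) / \<gamma>)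
      = (U2 \<theta> y - U1 \<theta> x) / (y - x) / \<gamma> powr (\<alpha> - 1)"
  proof (cases "y - x = 0")
    case True then show ?thesis by simp
  next
    case False then show ?thesis using g0 gp by (simp add: field_simps)
  qed
  then show ?thesis unfolding num e3 gpow_split .
qed

definition c12_cond :: "real \<Rightarrow> real \<times> real \<Rightarrow> bool" where
  "c12_cond \<theta> p \<longleftrightarrow> 0 < fst p \<and> fst p < c_tilde \<alpha> k \<theta> \<and> 1 < snd p \<and>
      ((snd p - 1) powr \<alpha> + \<theta> * snd p powr \<alpha> + k * (1 - fst p) powr \<alpha> - \<theta> * fst p powr \<alpha>)
          / (snd p - fst p)
        = \<alpha> * ((snd p - 1) powr (\<alpha> - 1) + \<theta> * snd p powr (\<alpha> - 1)) \<and>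
      \<alpha> * ((snd p - 1) powr (\<alpha> - 1) + \<theta> * snd p powr (\<alpha> - 1))
        = \<alpha> * (k * (1 - fst p) powr (\<alpha> - 1) + \<theta> * fst p powr (\<alpha> - 1))"

lemma c12_cond_iff:
  "c12_cond \<theta> (x / \<gamma>, y / \<gamma>) \<longleftrightarrow> 0 < x \<and> x < yt \<theta> \<and> \<gamma> < y \<and>
     (U2 \<theta> y - U1 \<theta> x) / (y - x) = h2 \<theta> y \<and> h2 \<theta> y = h1 \<theta> x"
proof -
  have gp: "0 < \<gamma> powr (\<alpha> - 1)" using g0 by simp
  have a: "0 < x / \<gamma> \<longleftrightarrow> 0 < x" using g0 by (simp add: zero_less_divide_iff)
  have b: "x / \<gamma> < c_tilde \<alpha> k \<theta> \<longleftrightarrow> x < yt \<theta>" unfolding yt_def using g0 by (simp add: divide_less_eq)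
  have c: "1 < y / \<gamma> \<longleftrightarrow> \<gamma> < y" using g0 by (simp add: less_divide_eq)
  have d: "(U2 \<theta> y - U1 \<theta> x) / (y - x) / \<gamma> powr (\<alpha> - 1) = h2 \<theta> y / \<gamma> powr (\<alpha> - 1)
     \<longleftrightarrow> (U2 \<theta> y - U1 \<theta> x) / (y - x) = h2 \<theta> y" using gp by (subst divide_cancel_right) simp
  have e: "h2 \<theta> y / \<gamma> powr (\<alpha> - 1) = h1 \<theta> x / \<gamma> powr (\<alpha> - 1) \<longleftrightarrow> h2 \<theta> y = h1 \<theta> x"
    using gp by (subst divide_cancel_right) simp
  show ?thesis unfolding c12_cond_def fst_conv snd_conv sc_h2 sc_h1 sc_chord a b c d e ..
qed

lemma c12_cond_pair: "c12_cond \<theta> p \<longleftrightarrow> c12_cond \<theta> ((fst p * \<gamma>) / \<gamma>, (snd p * \<gamma>) / \<gamma>)"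
  using g0 by simp

lemma c12_char:
  assumes th: "0 < \<theta>"
  shows "c12 \<alpha> k \<theta> = (J1 \<theta> (qs \<theta>) / \<gamma>, J2 \<theta> (qs \<theta>) / \<gamma>)"
    and "m1 \<alpha> k \<gamma> \<theta> = qs \<theta>"
proof -
  define q where "q = qs \<theta>"
  have q: "nt \<theta> < q" "D \<theta> q = 0" using qs_spec[OF th] unfolding q_def by auto
  have q0: "0 < q" using q nt_pos[OF th] by simp
  define x where "x = J1 \<theta> q"
  define y where "y = J2 \<theta> q"
  have x: "0 < x" "x < yt \<theta>" "h1 \<theta> x = q"
    using J1_spec[OF th] J1_lt[OF th q(1)] q unfolding x_def by auto
  have y: "\<gamma> < y" "h2 \<theta> y = q" using J2_spec[OF q0] unfolding y_def by auto
  have xy: "x < y" using x y yt_bounds[OF th] by simp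
  have "U1 \<theta> x - q * x = U2 \<theta> y - q * y"
    using q(2) unfolding D_def Av_def Bv_def x_def y_def by simp
  then have ch: "(U2 \<theta> y - U1 \<theta> x) / (y - x) = q" using xy by (simp add: field_simps)
  have cond: "c12_cond \<theta> (x / \<gamma>, y / \<gamma>)"
    unfolding c12_cond_iff using x y ch by simp
  have uniq: "p = (x / \<gamma>, y / \<gamma>)" if p: "c12_cond \<theta> p" for p
  proof -
    define x' where "x' = fst p * \<gamma>"
    define y' where "y' = snd p * \<gamma>"
    have c': "0 < x' \<and> x' < yt \<theta> \<and> \<gamma> < y' \<and> (U2 \<theta> y' - U1 \<theta> x') / (y' - x') = h2 \<theta> y' \<and> h2 \<theta> y' = h1 \<theta> x'"
      using p c12_cond_pair[of \<theta> p] c12_cond_iff[of \<theta> x' y'] unfolding x'_def y'_def by simp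
    define q' where "q' = h1 \<theta> x'"
    have q'n: "nt \<theta> < q'" unfolding q'_def using nt_less[OF th] c' by simp
    have q'0: "0 < q'" using q'n nt_pos[OF th] by simp
    have xe: "J1 \<theta> q' = x'" by (rule J1_eq[OF th]) (use c' in \<open>auto simp: q'_def\<close>)
    have ye: "J2 \<theta> q' = y'" by (rule J2_eq[OF q'0]) (use c' in \<open>auto simp: q'_def\<close>)
    have xy': "x' < y'" using c' yt_bounds[OF th] by simp
    have ch': "(U2 \<theta> y' - U1 \<theta> x') / (y' - x') = q'" using c' unfolding q'_def by simp
    have "U2 \<theta> y' - U1 \<theta> x' = q' * (y' - x')"
      using ch' xy' by (simp add: field_simps)
    then have "D \<theta> q' = 0" unfolding D_def Av_def Bv_def xe ye by (simp add: algebra_simps)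
    then have "qs \<theta> = q'" by (rule qs_unique[OF th, rotated]) (use q'n in simp)
    then have "q' = q" unfolding q_def by simp
    then have "x' = x" "y' = y" using xe ye unfolding x_def y_def by auto
    then show ?thesis unfolding x'_def y'_def using g0 by (cases p) auto
  qed
  have c12e: "c12 \<alpha> k \<theta> = (x / \<gamma>, y / \<gamma>)"
    unfolding c12_def c12_cond_def[symmetric]
    by (rule the_equality[of "c12_cond \<theta>", OF cond uniq])
  then show "c12 \<alpha> k \<theta> = (J1 \<theta> (qs \<theta>) / \<gamma>, J2 \<theta> (qs \<theta>) / \<gamma>)" unfolding x_def y_def q_def .
  have "m1 \<alpha> k \<gamma> \<theta> = \<gamma> powr (\<alpha> - 1) * ((U2 \<theta> y - U1 \<theta> x) / (y - x) / \<gamma> powr (\<alpha> - 1))"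
    unfolding m1_def Let_def c12e fst_conv snd_conv sc_chord ..
  also have "\<dots> = q" using ch g0 by simp
  finally show "m1 \<alpha> k \<gamma> \<theta> = qs \<theta>" unfolding q_def .
qed

end

context prm
begin

definition E :: "real \<Rightarrow> real \<Rightarrow> real" where
  "E \<theta> q = Bv \<theta> q + k * \<gamma> powr \<alpha>"

lemma E_decr: "0 < q1 \<Longrightarrow> q1 < q2 \<Longrightarrow> E \<theta> q2 < E \<theta> q1"
  unfolding E_def using Bv_decr by simp

lemma E_tendsto:
  assumes "(\<theta>f \<longlongrightarrow> \<theta>0) F" "(qf \<longlongrightarrow> q0) F" "0 < q0"
  shows "((\<lambda>x. E (\<theta>f x) (qf x)) \<longlongrightarrow> E \<theta>0 q0) F"
  unfolding E_def by (intro tendsto_add tendsto_const Bv_tendsto[OF assms])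

lemma E_cont: "continuous_on {0<..} (E \<theta>)"
  unfolding continuous_on_def
proof (intro ballI)
  fix q :: real assume q: "q \<in> {0<..}"
  have "((\<lambda>x. E \<theta> x) \<longlongrightarrow> E \<theta> q) (at q within {0<..})"
    by (rule E_tendsto[OF tendsto_const tendsto_ident_at]) (use q in simp)
  then show "(E \<theta> \<longlongrightarrow> E \<theta> q) (at q within {0<..})" by simp
qed

lemma E_large_neg:
  assumes "\<theta> \<le> 0"
  shows "\<exists>q>0. E \<theta> q < 0"
proof -
  define q where "q = \<gamma> powr (\<alpha> - 1) + k * \<gamma> powr (\<alpha> - 1) + 1"
  have kg: "0 \<le> k * \<gamma> powr (\<alpha> - 1)" using k0 by simp
  have q1: "(1 + 0) * \<gamma> powr (\<alpha> - 1) \<le> q" unfolding q_def using kg by simp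
  have "0 < \<gamma> powr (\<alpha> - 1)" using g0 by simp
  then have q0: "0 < q" unfolding q_def using kg by linarith
  have "Bv \<theta> q \<le> \<gamma> * ((1 + 0) * \<gamma> powr (\<alpha> - 1) - q)"
    by (rule Bv_upper[OF order.refl assms q1])
  also have "\<dots> = - (k * (\<gamma> * \<gamma> powr (\<alpha> - 1)) + \<gamma>)" unfolding q_def by (simp add: algebra_simps)
  also have "\<dots> = - (k * \<gamma> powr \<alpha> + \<gamma>)" using gpow_split by simp
  finally have "E \<theta> q < 0" unfolding E_def using g0 by simp
  then show ?thesis using q0 by blast
qed

lemma E_small_pos:
  assumes w: "\<gamma> \<le> w" "- k * \<gamma> powr \<alpha> < U2 \<theta> w"
  shows "\<exists>q>0. 0 < E \<theta> q"
proof -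
  have w0: "0 < w" using w g0 by simp
  define q where "q = (U2 \<theta> w + k * \<gamma> powr \<alpha>) / (2 * w)"
  have pos: "0 < U2 \<theta> w + k * \<gamma> powr \<alpha>" using w by simp
  have q0: "0 < q" unfolding q_def using pos w0 by simp
  have "q * w = (U2 \<theta> w + k * \<gamma> powr \<alpha>) / 2" unfolding q_def using w0 by simp
  then have "0 < U2 \<theta> w - q * w + k * \<gamma> powr \<alpha>" using pos by simp
  also have "\<dots> \<le> E \<theta> q" unfolding E_def using U2_max[OF q0 w(1), of \<theta>] by simp
  finally show ?thesis using q0 by blast
qed

lemma witness_ge_m1:
  assumes k: "0 < k" and th: "-1 \<le> \<theta>"
  shows "\<exists>w\<ge>\<gamma>. - k * \<gamma> powr \<alpha> < U2 \<theta> w"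
proof -
  define c where "c = k * \<gamma> powr (\<alpha> - 1) / (2 * \<alpha>)"
  have c0: "0 < c" unfolding c_def using k a0 g0 by simp
  define d where "d = c powr (1 / (\<alpha> - 1))"
  have d0: "0 < d" unfolding d_def using c0 by simp
  have dc: "d powr (\<alpha> - 1) = c" unfolding d_def by (rule powr_inv_cancel[OF c0])
  define w where "w = \<gamma> + d"
  have wd: "w - \<gamma> = d" unfolding w_def by simp
  have "w powr \<alpha> - d powr \<alpha> \<le> (\<alpha> * d powr (\<alpha> - 1)) * (w - d)"
  proof (rule mvt_upper[where f="\<lambda>t. t powr \<alpha>" and f'="\<lambda>t. \<alpha> * t powr (\<alpha> - 1)"])
    show "d \<le> w" unfolding w_def using g0 by simp
    show "continuous_on {d..w} (\<lambda>t. t powr \<alpha>)" using d0 by (intro continuous_intros) auto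
    fix t assume t: "d < t" "t < w"
    show "((\<lambda>t. t powr \<alpha>) has_real_derivative \<alpha> * t powr (\<alpha> - 1)) (at t)"
      using has_real_derivative_powr[of t \<alpha>] t d0 by simp
    have "t powr (\<alpha> - 1) \<le> d powr (\<alpha> - 1)" using powr_mono2'[of "\<alpha> - 1" d t] a1 d0 t by simp
    then show "\<alpha> * t powr (\<alpha> - 1) \<le> \<alpha> * d powr (\<alpha> - 1)" using a0 by (intro mult_left_mono) auto
  qed
  also have "\<dots> = \<alpha> * c * \<gamma>" unfolding dc w_def by simp
  also have "\<dots> = k * \<gamma> powr \<alpha> / 2" unfolding c_def using a0 gpow_split by simp
  finally have m: "w powr \<alpha> - d powr \<alpha> \<le> k * \<gamma> powr \<alpha> / 2" .
  have "- (w powr \<alpha>) \<le> \<theta> * w powr \<alpha>"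
  proof -
    have "(-1) * w powr \<alpha> \<le> \<theta> * w powr \<alpha>" using th by (intro mult_right_mono) auto
    then show ?thesis by simp
  qed
  then have "d powr \<alpha> - w powr \<alpha> \<le> U2 \<theta> w" unfolding U2_def wd by simp
  moreover have "0 < k * \<gamma> powr \<alpha>" using k g0 by simp
  ultimately have "- k * \<gamma> powr \<alpha> < U2 \<theta> w" using m by simp
  moreover have "\<gamma> \<le> w" unfolding w_def using d0 by simp
  ultimately show ?thesis by blast
qed

definition sth :: "real \<Rightarrow> real" where
  "sth \<theta> = \<bar>\<theta>\<bar> powr (- 1 / (1 - \<alpha>))"

lemma sth_props:
  assumes th: "\<theta> < -1"
  shows "0 < sth \<theta>" "sth \<theta> < 1" "sth \<theta> powr (\<alpha> - 1) = - \<theta>" "1 / sth \<theta> = (- \<theta>) powr (1 / (1 - \<alpha>))"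
proof -
  have t: "1 < - \<theta>" "\<bar>\<theta>\<bar> = - \<theta>" using th by auto
  show "0 < sth \<theta>" unfolding sth_def using th by simp
  have "(- \<theta>) powr (- 1 / (1 - \<alpha>)) < 1 powr (- 1 / (1 - \<alpha>))"
    using a1 t by (intro powr_less_mono2_neg) (auto simp: divide_neg_pos)
  then show "sth \<theta> < 1" unfolding sth_def t by simp
  have e: "- 1 / (1 - \<alpha>) * (\<alpha> - 1) = 1" using a1 by (simp add: field_simps)
  show "sth \<theta> powr (\<alpha> - 1) = - \<theta>" unfolding sth_def t powr_powr e using t by simp
  show "1 / sth \<theta> = (- \<theta>) powr (1 / (1 - \<alpha>))" unfolding sth_def t
    using powr_minus_divide[of "- \<theta>" "1 / (1 - \<alpha>)"] by simp
qed

lemma witness_lt_m1: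
  assumes k: "0 < k" and th: "\<theta> < -1" and tl: "theta_low \<alpha> k < \<theta>"
  shows "\<exists>w\<ge>\<gamma>. - k * \<gamma> powr \<alpha> < U2 \<theta> w"
proof -
  define s where "s = sth \<theta>"
  have s: "0 < s" "s < 1" "s powr (\<alpha> - 1) = - \<theta>" "1 / s = (- \<theta>) powr (1 / (1 - \<alpha>))"
    using sth_props[OF th] unfolding s_def by auto
  define w where "w = \<gamma> / (1 - s)"
  have w: "\<gamma> < w" unfolding w_def using s g0 by (simp add: less_divide_eq)
  have wg: "w - \<gamma> = w * s" unfolding w_def using s by (simp add: field_simps)
  have w0: "0 < w" using w g0 by simp
  have "U2 \<theta> w = w powr \<alpha> * (s powr \<alpha> + \<theta>)"
    unfolding U2_def wg powr_mult by (simp add: algebra_simps)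
  also have "s powr \<alpha> + \<theta> = s * s powr (\<alpha> - 1) - s powr (\<alpha> - 1)"
    using powr_alpha_split[OF s(1)] s(3) by simp
  also have "\<dots> = - (s powr (\<alpha> - 1) * (1 - s))" by (simp add: algebra_simps)
  finally have U: "U2 \<theta> w = - (w powr \<alpha> * s powr (\<alpha> - 1) * (1 - s))" by simp
  have wpow: "w powr \<alpha> = \<gamma> powr \<alpha> / (1 - s) powr \<alpha>" unfolding w_def powr_divide ..
  have "(1 - s) / (1 - s) powr \<alpha> = (1 - s) powr (1 - \<alpha>)"
    using s by (simp add: powr_diff)
  moreover have "w powr \<alpha> * s powr (\<alpha> - 1) * (1 - s) = \<gamma> powr \<alpha> * (s powr (\<alpha> - 1) * ((1 - s) / (1 - s) powr \<alpha>))"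
    unfolding wpow by simp
  ultimately have "w powr \<alpha> * s powr (\<alpha> - 1) * (1 - s) = \<gamma> powr \<alpha> * (s powr (\<alpha> - 1) * (1 - s) powr (1 - \<alpha>))"
    by simp
  also have "s powr (\<alpha> - 1) * (1 - s) powr (1 - \<alpha>) = ((1 - s) / s) powr (1 - \<alpha>)"
  proof -
    have "(1 / s) powr (1 - \<alpha>) = 1 / s powr (1 - \<alpha>)" by (simp add: powr_divide)
    also have "\<dots> = s powr (- (1 - \<alpha>))" by (rule powr_minus_divide[symmetric])
    finally have "s powr (\<alpha> - 1) = (1 / s) powr (1 - \<alpha>)" by simp
    then show ?thesis by (simp add: powr_divide field_simps)
  qed
  finally have U': "U2 \<theta> w = - (\<gamma> powr \<alpha> * ((1 - s) / s) powr (1 - \<alpha>))" using U by simp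
  define K where "K = k powr (1 / (1 - \<alpha>))"
  have K0: "0 < K" unfolding K_def using k by simp
  have tl': "- \<theta> < (1 + K) powr (1 - \<alpha>)"
    using tl unfolding theta_low_def K_def by simp
  have "(- \<theta>) powr (1 / (1 - \<alpha>)) < ((1 + K) powr (1 - \<alpha>)) powr (1 / (1 - \<alpha>))"
    using tl' th a1 by (intro powr_less_mono2) auto
  also have "\<dots> = 1 + K" using a1 K0 by (simp add: powr_powr)
  finally have "1 / s < 1 + K" using s(4) by simp
  then have "(1 - s) / s < K" using s(1,2) by (simp add: field_simps)
  then have "((1 - s) / s) powr (1 - \<alpha>) < K powr (1 - \<alpha>)"
    using s a1 by (intro powr_less_mono2) auto
  also have "K powr (1 - \<alpha>) = k" unfolding K_def using a1 k by (simp add: powr_powr)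
  finally have "\<gamma> powr \<alpha> * ((1 - s) / s) powr (1 - \<alpha>) < \<gamma> powr \<alpha> * k"
    using g0 by (intro mult_strict_left_mono) auto
  then have "- k * \<gamma> powr \<alpha> < U2 \<theta> w" unfolding U' by (simp add: algebra_simps)
  then show ?thesis using w by (intro exI[of _ w]) auto
qed

definition dom2 :: "real \<Rightarrow> bool" where
  "dom2 \<theta> \<longleftrightarrow> theta_low \<alpha> k < \<theta> \<and> \<theta> \<le> 0"

lemma E_root_ex:
  assumes k: "0 < k" and th: "dom2 \<theta>"
  shows "\<exists>!q. 0 < q \<and> E \<theta> q = 0"
proof -
  have th0: "\<theta> \<le> 0" using th unfolding dom2_def by simp
  obtain w where w: "\<gamma> \<le> w" "- k * \<gamma> powr \<alpha> < U2 \<theta> w"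
  proof (cases "-1 \<le> \<theta>")
    case True then show ?thesis using witness_ge_m1[OF k True] that by blast
  next
    case False then show ?thesis using witness_lt_m1[OF k] th that unfolding dom2_def by force
  qed
  obtain qa where qa: "0 < qa" "0 < E \<theta> qa" using E_small_pos[OF w] by blast
  obtain qb where qb: "0 < qb" "E \<theta> qb < 0" using E_large_neg[OF th0] by blast
  have ab: "qa < qb"
  proof (rule ccontr)
    assume "\<not> qa < qb"
    then have "qb \<le> qa" by simp
    then have "E \<theta> qa \<le> E \<theta> qb" using E_decr[OF qb(1), of qa \<theta>] by (cases "qb = qa") auto
    then show False using qa qb by simp
  qed
  have cont: "continuous_on {qa..qb} (E \<theta>)" by (rule continuous_on_subset[OF E_cont]) (use qa in auto)
  obtain q where q: "qa \<le> q" "q \<le> qb" "E \<theta> q = 0"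
    using IVT2'[of "E \<theta>" qb 0 qa] qa qb ab cont by force
  show ?thesis
  proof (rule ex1I[of _ q])
    show "0 < q \<and> E \<theta> q = 0" using q qa by simp
    fix p assume p: "0 < p \<and> E \<theta> p = 0"
    show "p = q"
    proof (rule ccontr)
      assume "p \<noteq> q"
      then consider "p < q" | "q < p" by linarith
      then show False
      proof cases
        case 1 then show False using E_decr[of p q \<theta>] p q by simp
      next
        case 2 then show False using E_decr[of q p \<theta>] p q qa by simp
      qed
    qed
  qed
qed

definition q2s :: "real \<Rightarrow> real" where
  "q2s \<theta> = (THE q. 0 < q \<and> E \<theta> q = 0)"

lemma q2s_spec:
  assumes "0 < k" "dom2 \<theta>"
  shows "0 < q2s \<theta>" "E \<theta> (q2s \<theta>) = 0"
  using theI'[OF E_root_ex[OF assms]] unfolding q2s_def by auto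

lemma q2s_unique:
  assumes "0 < k" "dom2 \<theta>" "0 < q" "E \<theta> q = 0"
  shows "q2s \<theta> = q"
  using E_root_ex[OF assms(1,2)] q2s_spec[OF assms(1,2)] assms(3,4) by blast

lemma q2s_tendsto:
  assumes k: "0 < k" and th: "(\<theta>f \<longlongrightarrow> \<theta>0) F" and t0: "dom2 \<theta>0"
    and ev: "eventually (\<lambda>x. dom2 (\<theta>f x)) F"
  shows "((\<lambda>x. q2s (\<theta>f x)) \<longlongrightarrow> q2s \<theta>0) F"
proof (rule order_tendstoI)
  have s0: "0 < q2s \<theta>0" "E \<theta>0 (q2s \<theta>0) = 0" using q2s_spec[OF k t0] by auto
  fix a assume a: "a < q2s \<theta>0"
  define a' where "a' = max a (q2s \<theta>0 / 2)"
  have "0 < q2s \<theta>0 / 2" "q2s \<theta>0 / 2 < q2s \<theta>0" using s0 by auto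
  then have a': "0 < a'" "a' < q2s \<theta>0" "a \<le> a'" using a unfolding a'_def by (auto simp: less_max_iff_disj)
  have Ea: "0 < E \<theta>0 a'" using E_decr[OF a'(1) a'(2), of \<theta>0] s0 by simp
  have "((\<lambda>x. E (\<theta>f x) a') \<longlongrightarrow> E \<theta>0 a') F" by (rule E_tendsto[OF th tendsto_const a'(1)])
  then have ev2: "eventually (\<lambda>x. 0 < E (\<theta>f x) a') F" using Ea by (rule order_tendstoD(1))
  show "eventually (\<lambda>x. a < q2s (\<theta>f x)) F"
    using ev ev2
  proof eventually_elim
    case (elim x)
    have s: "0 < q2s (\<theta>f x)" "E (\<theta>f x) (q2s (\<theta>f x)) = 0" using q2s_spec[OF k elim(1)] by auto
    have "a' < q2s (\<theta>f x)"
    proof (rule ccontr)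
      assume "\<not> a' < q2s (\<theta>f x)"
      then consider "q2s (\<theta>f x) = a'" | "q2s (\<theta>f x) < a'" by linarith
      then show False
      proof cases
        case 1 then show False using s elim by simp
      next
        case 2 then show False using E_decr[OF s(1) 2, of "\<theta>f x"] s elim by simp
      qed
    qed
    then show ?case using a' by simp
  qed
next
  have s0: "0 < q2s \<theta>0" "E \<theta>0 (q2s \<theta>0) = 0" using q2s_spec[OF k t0] by auto
  fix b assume b: "q2s \<theta>0 < b"
  have b0: "0 < b" using s0 b by simp
  have Eb: "E \<theta>0 b < 0" using E_decr[OF s0(1) b, of \<theta>0] s0 by simp
  have "((\<lambda>x. E (\<theta>f x) b) \<longlongrightarrow> E \<theta>0 b) F" by (rule E_tendsto[OF th tendsto_const b0])
  then have ev2: "eventually (\<lambda>x. E (\<theta>f x) b < 0) F" using Eb by (rule order_tendstoD(2))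
  show "eventually (\<lambda>x. q2s (\<theta>f x) < b) F"
    using ev ev2
  proof eventually_elim
    case (elim x)
    have s: "0 < q2s (\<theta>f x)" "E (\<theta>f x) (q2s (\<theta>f x)) = 0" using q2s_spec[OF k elim(1)] by auto
    show ?case
    proof (rule ccontr)
      assume "\<not> q2s (\<theta>f x) < b"
      then consider "q2s (\<theta>f x) = b" | "b < q2s (\<theta>f x)" by linarith
      then show False
      proof cases
        case 1 then show False using s elim by simp
      next
        case 2 then show False using E_decr[OF b0 2, of "\<theta>f x"] s elim by simp
      qed
    qed
  qed
qed

end

context prm
begin

lemma sc_c3:
  "((y / \<gamma> - 1) powr \<alpha> + \<theta> * (y / \<gamma>) powr \<alpha> + k) / (y / \<gamma>)
     = (U2 \<theta> y + k * \<gamma> powr \<alpha>) / y / \<gamma> powr (\<alpha> - 1)"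
proof -
  have e1: "y / \<gamma> - 1 = (y - \<gamma>) / \<gamma>" using g0 by (simp add: field_simps)
  have gp: "0 < \<gamma> powr \<alpha>" using g0 by simp
  have gp1: "0 < \<gamma> powr (\<alpha> - 1)" using g0 by simp
  have num: "(y / \<gamma> - 1) powr \<alpha> + \<theta> * (y / \<gamma>) powr \<alpha> + k = (U2 \<theta> y + k * \<gamma> powr \<alpha>) / \<gamma> powr \<alpha>"
    unfolding e1 U2_def powr_divide using gp by (simp add: field_simps)
  have "(U2 \<theta> y + k * \<gamma> powr \<alpha>) / (\<gamma> * \<gamma> powr (\<alpha> - 1)) / (y / \<gamma>)
      = (U2 \<theta> y + k * \<gamma> powr \<alpha>) / y / \<gamma> powr (\<alpha> - 1)"
  proof (cases "y = 0")
    case True then show ?thesis by simp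
  next
    case False then show ?thesis using g0 gp1 by (simp add: field_simps)
  qed
  then show ?thesis unfolding num gpow_split .
qed

lemma h2_pos_iff:
  assumes th: "\<theta> \<le> 0" and y: "\<gamma> < y"
  shows "0 < h2 \<theta> y \<longleftrightarrow> (\<theta> < -1 \<longrightarrow> y < \<gamma> / (1 - sth \<theta>))"
proof -
  have y0: "0 < y" using y g0 by simp
  define r where "r = (y - \<gamma>) / y"
  have r: "0 < r" "r < 1" unfolding r_def using y y0 g0 by (auto simp: field_simps)
  have hf: "h2 \<theta> y = \<alpha> * y powr (\<alpha> - 1) * (r powr (\<alpha> - 1) + \<theta>)"
    using h2_factor[OF y] unfolding r_def .
  have ap: "0 < \<alpha> * y powr (\<alpha> - 1)" using a0 y0 by simp
  have pos: "0 < h2 \<theta> y \<longleftrightarrow> 0 < r powr (\<alpha> - 1) + \<theta>"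
    unfolding hf using ap zero_less_mult_pos[of "\<alpha> * y powr (\<alpha> - 1)"] mult_pos_pos[OF ap] by blast
  show ?thesis
  proof (cases "\<theta> < -1")
    case False
    have "1 powr (\<alpha> - 1) < r powr (\<alpha> - 1)" using r a1 by (intro powr_less_mono2_neg) auto
    then have "0 < r powr (\<alpha> - 1) + \<theta>" using False by simp
    then show ?thesis using pos False by simp
  next
    case True
    define s where "s = sth \<theta>"
    have s: "0 < s" "s < 1" "s powr (\<alpha> - 1) = - \<theta>" using sth_props[OF True] unfolding s_def by auto
    have "0 < r powr (\<alpha> - 1) + \<theta> \<longleftrightarrow> r < s"
    proof
      assume a: "0 < r powr (\<alpha> - 1) + \<theta>"
      show "r < s"
      proof (rule ccontr)
        assume "\<not> r < s"
        then have "r powr (\<alpha> - 1) \<le> s powr (\<alpha> - 1)" using powr_mono2'[of "\<alpha> - 1" s r] a1 s by simp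
        then show False using a s by simp
      qed
    next
      assume "r < s"
      then have "s powr (\<alpha> - 1) < r powr (\<alpha> - 1)" using r a1 by (intro powr_less_mono2_neg) auto
      then show "0 < r powr (\<alpha> - 1) + \<theta>" using s by simp
    qed
    moreover have "r < s \<longleftrightarrow> y < \<gamma> / (1 - s)"
      unfolding r_def using s y0 g0 by (simp add: field_simps)
    ultimately show ?thesis using pos True unfolding s_def by simp
  qed
qed

definition c3_cond :: "real \<Rightarrow> real \<Rightarrow> bool" where
  "c3_cond \<theta> c \<longleftrightarrow> 1 < c \<and>
      (\<theta> < -1 \<longrightarrow> c < 1 / (1 - \<bar>\<theta>\<bar> powr (- 1 / (1 - \<alpha>)))) \<and>
      ((c - 1) powr \<alpha> + \<theta> * c powr \<alpha> + k) / c
        = \<alpha> * ((c - 1) powr (\<alpha> - 1) + \<theta> * c powr (\<alpha> - 1))"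

lemma c3_cond_iff:
  assumes th: "\<theta> \<le> 0"
  shows "c3_cond \<theta> (y / \<gamma>) \<longleftrightarrow> \<gamma> < y \<and> 0 < h2 \<theta> y \<and> (U2 \<theta> y + k * \<gamma> powr \<alpha>) / y = h2 \<theta> y"
proof -
  have gp: "0 < \<gamma> powr (\<alpha> - 1)" using g0 by simp
  have c: "1 < y / \<gamma> \<longleftrightarrow> \<gamma> < y" using g0 by (simp add: less_divide_eq)
  have b: "\<gamma> < y \<Longrightarrow> (\<theta> < -1 \<longrightarrow> y / \<gamma> < 1 / (1 - \<bar>\<theta>\<bar> powr (- 1 / (1 - \<alpha>)))) \<longleftrightarrow> 0 < h2 \<theta> y"
  proof -
    assume y: "\<gamma> < y"
    have "\<theta> < -1 \<Longrightarrow> y / \<gamma> < 1 / (1 - sth \<theta>) \<longleftrightarrow> y < \<gamma> / (1 - sth \<theta>)"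
      using sth_props g0 by (simp add: field_simps)
    then show ?thesis using h2_pos_iff[OF th y] unfolding sth_def by auto
  qed
  have d: "(U2 \<theta> y + k * \<gamma> powr \<alpha>) / y / \<gamma> powr (\<alpha> - 1) = h2 \<theta> y / \<gamma> powr (\<alpha> - 1)
     \<longleftrightarrow> (U2 \<theta> y + k * \<gamma> powr \<alpha>) / y = h2 \<theta> y" using gp by (subst divide_cancel_right) simp
  show ?thesis unfolding c3_cond_def sc_c3 sc_h2 d using b c by blast
qed

lemma c3_char:
  assumes k: "0 < k" and th: "dom2 \<theta>"
  shows "c3 \<alpha> k \<theta> = J2 \<theta> (q2s \<theta>) / \<gamma>" and "m2 \<alpha> k \<gamma> \<theta> = q2s \<theta>"
proof -
  have th0: "\<theta> \<le> 0" using th unfolding dom2_def by simp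
  define q where "q = q2s \<theta>"
  have q: "0 < q" "E \<theta> q = 0" using q2s_spec[OF k th] unfolding q_def by auto
  define y where "y = J2 \<theta> q"
  have y: "\<gamma> < y" "h2 \<theta> y = q" using J2_spec[OF q(1)] unfolding y_def by auto
  have y0: "0 < y" using y g0 by simp
  have "U2 \<theta> y - q * y + k * \<gamma> powr \<alpha> = 0" using q(2) unfolding E_def Bv_def y_def by simp
  then have ch: "(U2 \<theta> y + k * \<gamma> powr \<alpha>) / y = q" using y0 by (simp add: field_simps)
  have cond: "c3_cond \<theta> (y / \<gamma>)" unfolding c3_cond_iff[OF th0] using y q ch by simp
  have uniq: "c = y / \<gamma>" if c: "c3_cond \<theta> c" for c
  proof -
    define y' where "y' = c * \<gamma>"
    have c': "\<gamma> < y' \<and> 0 < h2 \<theta> y' \<and> (U2 \<theta> y' + k * \<gamma> powr \<alpha>) / y' = h2 \<theta> y'"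
      using c c3_cond_iff[OF th0, of y'] g0 unfolding y'_def by simp
    define q' where "q' = h2 \<theta> y'"
    have q'0: "0 < q'" using c' unfolding q'_def by simp
    have ye: "J2 \<theta> q' = y'" by (rule J2_eq[OF q'0]) (use c' in \<open>auto simp: q'_def\<close>)
    have y'0: "0 < y'" using c' g0 by simp
    have ch': "(U2 \<theta> y' + k * \<gamma> powr \<alpha>) / y' = q'" using c' unfolding q'_def by simp
    have "U2 \<theta> y' + k * \<gamma> powr \<alpha> = q' * y'" using ch' y'0 by (simp add: field_simps)
    then have "E \<theta> q' = 0" unfolding E_def Bv_def ye by simp
    then have "q2s \<theta> = q'" by (rule q2s_unique[OF k th q'0])
    then have "y' = y" using ye unfolding y_def q_def by simp
    then show ?thesis unfolding y'_def using g0 by (simp add: field_simps)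
  qed
  have c3e: "c3 \<alpha> k \<theta> = y / \<gamma>"
    unfolding c3_def c3_cond_def[symmetric]
    by (rule the_equality[of "c3_cond \<theta>", OF cond uniq])
  then show "c3 \<alpha> k \<theta> = J2 \<theta> (q2s \<theta>) / \<gamma>" unfolding y_def q_def .
  have "m2 \<alpha> k \<gamma> \<theta> = \<gamma> powr (\<alpha> - 1) * ((U2 \<theta> y + k * \<gamma> powr \<alpha>) / y / \<gamma> powr (\<alpha> - 1))"
    unfolding m2_def Let_def c3e sc_c3 ..
  also have "\<dots> = q" using ch g0 by simp
  finally show "m2 \<alpha> k \<gamma> \<theta> = q2s \<theta>" unfolding q_def .
qed

end

context prm
begin

definition Phi :: "real \<Rightarrow> real \<Rightarrow> real" where
  "Phi \<theta> q = y_lam \<alpha> k \<gamma> \<theta> 1 q"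

lemma y_lam_Phi: "y_lam \<alpha> k \<gamma> \<theta> lam z = Phi \<theta> (lam * z)"
  unfolding Phi_def y_lam_def by simp

lemma Phi_pos: "0 < \<theta> \<Longrightarrow> Phi \<theta> q = (if qs \<theta> < q then J1 \<theta> q else J2 \<theta> q)"
  unfolding Phi_def y_lam_def using c12_char(2) by simp

lemma Phi_neg: "0 < k \<Longrightarrow> dom2 \<theta> \<Longrightarrow> Phi \<theta> q = (if q \<le> q2s \<theta> then J2 \<theta> q else 0)"
  unfolding Phi_def y_lam_def using c3_char(2) unfolding dom2_def by auto

definition Dm :: "real \<Rightarrow> bool" where
  "Dm \<theta> \<longleftrightarrow> 0 < \<theta> \<or> (0 < k \<and> dom2 \<theta>)"

lemma Dm_cases:
  assumes "Dm \<theta>"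
  obtains "0 < \<theta>" | "0 < k" "dom2 \<theta>" "\<theta> \<le> 0"
  using assms unfolding Dm_def dom2_def by auto

lemma qs_pos: "0 < \<theta> \<Longrightarrow> 0 < qs \<theta>"
  using qs_spec nt_pos by (meson order.strict_trans)

lemma Phi_nonneg:
  assumes "Dm \<theta>" "0 < q"
  shows "0 \<le> Phi \<theta> q"
  using assms(1)
proof (cases rule: Dm_cases)
  case 1
  show ?thesis
  proof (cases "qs \<theta> < q")
    case True
    have "nt \<theta> \<le> q" using qs_spec[OF 1] True by simp
    then have "0 < J1 \<theta> q" using J1_spec[OF 1] by blast
    then show ?thesis using Phi_pos[OF 1] True by simp
  next
    case False then show ?thesis using Phi_pos[OF 1] J2_gt[OF assms(2), of \<theta>] g0 by simp
  qed
next
  case 2 then show ?thesis using Phi_neg[OF 2(1,2)] J2_gt[OF assms(2), of \<theta>] g0 by simp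
qed

lemma Phi_upper:
  assumes "Dm \<theta>" "0 < q" "\<theta> \<le> T" "0 \<le> T"
  shows "Phi \<theta> q \<le> \<gamma> + (q / (\<alpha> * (1 + T))) powr (1 / (\<alpha> - 1))"
proof -
  have J2b: "J2 \<theta> q \<le> \<gamma> + (q / (\<alpha> * (1 + T))) powr (1 / (\<alpha> - 1))"
    by (rule J2_upper[OF assms(2,3,4)])
  have p: "0 \<le> (q / (\<alpha> * (1 + T))) powr (1 / (\<alpha> - 1))" by simp
  show ?thesis using assms(1)
  proof (cases rule: Dm_cases)
    case 1
    show ?thesis
    proof (cases "qs \<theta> < q")
      case True
      have "nt \<theta> \<le> q" using qs_spec[OF 1] True by simp
      then have "J1 \<theta> q \<le> \<gamma>" using J1_spec[OF 1] yt_bounds[OF 1] by force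
      then have "J1 \<theta> q \<le> \<gamma> + (q / (\<alpha> * (1 + T))) powr (1 / (\<alpha> - 1))" using p by linarith
      then show ?thesis using Phi_pos[OF 1] True by simp
    next
      case False then show ?thesis using Phi_pos[OF 1] J2b by simp
    qed
  next
    case 2 then show ?thesis using Phi_neg[OF 2(1,2)] J2b p g0 by simp
  qed
qed

lemma Phi_antimono:
  assumes "Dm \<theta>" "0 < q1" "q1 \<le> q2"
  shows "Phi \<theta> q2 \<le> Phi \<theta> q1"
proof (cases "q1 = q2")
  case True then show ?thesis by simp
next
  case False
  then have lt: "q1 < q2" using assms by simp
  have J2d: "J2 \<theta> q2 < J2 \<theta> q1" by (rule J2_decr[OF assms(2) lt])
  have q20: "0 < q2" using assms by simp
  show ?thesis using assms(1)
  proof (cases rule: Dm_cases)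
    case 1
    note Pp = Phi_pos[OF 1]
    show ?thesis
    proof (cases "qs \<theta> < q1")
      case True
      have "nt \<theta> \<le> q1" using qs_spec[OF 1] True by simp
      then have "J1 \<theta> q2 < J1 \<theta> q1" by (rule J1_decr[OF 1 _ lt])
      then show ?thesis using Pp True lt by simp
    next
      case False
      show ?thesis
      proof (cases "qs \<theta> < q2")
        case True
        have "nt \<theta> \<le> q2" using qs_spec[OF 1] True by simp
        then have "J1 \<theta> q2 \<le> \<gamma>" using J1_spec[OF 1] yt_bounds[OF 1] by force
        then show ?thesis using Pp True False J2_gt[OF assms(2), of \<theta>] by simp
      next
        case False2: False
        then show ?thesis using Pp False J2d by simp
      qed
    qed
  next
    case 2
    note Pn = Phi_neg[OF 2(1,2)]
    show ?thesis using Pn J2d J2_gt[OF assms(2), of \<theta>] J2_gt[OF q20, of \<theta>] g0 lt by auto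
  qed
qed

lemma Phi_strict:
  assumes "Dm \<theta>" "0 < q1" "q1 < q2" "\<theta> \<le> 0 \<Longrightarrow> q2 \<le> q2s \<theta>"
  shows "Phi \<theta> q2 < Phi \<theta> q1"
proof -
  have J2d: "J2 \<theta> q2 < J2 \<theta> q1" by (rule J2_decr[OF assms(2,3)])
  show ?thesis using assms(1)
  proof (cases rule: Dm_cases)
    case 1
    note Pp = Phi_pos[OF 1]
    show ?thesis
    proof (cases "qs \<theta> < q1")
      case True
      have "nt \<theta> \<le> q1" using qs_spec[OF 1] True by simp
      then have "J1 \<theta> q2 < J1 \<theta> q1" by (rule J1_decr[OF 1 _ assms(3)])
      then show ?thesis using Pp True assms(3) by simp
    next
      case False
      show ?thesis
      proof (cases "qs \<theta> < q2")
        case True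
        have "nt \<theta> \<le> q2" using qs_spec[OF 1] True by simp
        then have "J1 \<theta> q2 \<le> \<gamma>" using J1_spec[OF 1] yt_bounds[OF 1] by force
        then show ?thesis using Pp True False J2_gt[OF assms(2), of \<theta>] by simp
      next
        case False2: False
        then show ?thesis using Pp False J2d by simp
      qed
    qed
  next
    case 2
    then show ?thesis using Phi_neg[OF 2(1,2)] J2d assms by simp
  qed
qed

definition mth :: "real \<Rightarrow> real" where
  "mth \<theta> = (if 0 < \<theta> then qs \<theta> else q2s \<theta>)"

lemma Phi_tendsto_pos:
  assumes th: "(\<theta>f \<longlongrightarrow> \<theta>0) F" and t0: "0 < \<theta>0" and qq: "(qf \<longlongrightarrow> q0) F" and q0: "0 < q0"
    and qm: "q0 \<noteq> qs \<theta>0"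
  shows "((\<lambda>x. Phi (\<theta>f x) (qf x)) \<longlongrightarrow> Phi \<theta>0 q0) F"
proof -
  have evt: "eventually (\<lambda>x. 0 < \<theta>f x) F" using order_tendstoD(1)[OF th t0] .
  have QS: "((\<lambda>x. qf x - qs (\<theta>f x)) \<longlongrightarrow> q0 - qs \<theta>0) F"
    by (intro tendsto_diff qq qs_tendsto[OF th t0])
  show ?thesis
  proof (cases "qs \<theta>0 < q0")
    case True
    have ev: "eventually (\<lambda>x. qs (\<theta>f x) < qf x) F"
      using order_tendstoD(1)[OF QS, of 0] True by simp
    have ev2: "eventually (\<lambda>x. 0 < \<theta>f x \<and> nt (\<theta>f x) \<le> qf x) F"
      using ev evt
    proof eventually_elim
      case (elim x) then show ?case using qs_spec[of "\<theta>f x"] by force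
    qed
    have n0: "nt \<theta>0 \<le> q0" using qs_spec[OF t0] True by simp
    have "((\<lambda>x. J1 (\<theta>f x) (qf x)) \<longlongrightarrow> J1 \<theta>0 q0) F" by (rule J1_tendsto[OF th qq t0 n0 ev2])
    moreover have "eventually (\<lambda>x. J1 (\<theta>f x) (qf x) = Phi (\<theta>f x) (qf x)) F"
      using ev evt by eventually_elim (simp add: Phi_pos)
    ultimately show ?thesis using Phi_pos[OF t0] True by (simp add: Lim_transform_eventually)
  next
    case False
    then have lt: "q0 < qs \<theta>0" using qm by simp
    have ev: "eventually (\<lambda>x. qf x < qs (\<theta>f x)) F"
      using order_tendstoD(2)[OF QS, of 0] lt by simp
    have "((\<lambda>x. J2 (\<theta>f x) (qf x)) \<longlongrightarrow> J2 \<theta>0 q0) F" by (rule J2_tendsto[OF th qq q0])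
    moreover have "eventually (\<lambda>x. J2 (\<theta>f x) (qf x) = Phi (\<theta>f x) (qf x)) F"
      using ev evt by eventually_elim (simp add: Phi_pos)
    ultimately show ?thesis using Phi_pos[OF t0] lt by (simp add: Lim_transform_eventually)
  qed
qed

lemma Phi_tendsto_neg:
  assumes k: "0 < k" and th: "(\<theta>f \<longlongrightarrow> \<theta>0) F" and t0: "dom2 \<theta>0"
    and evd: "eventually (\<lambda>x. dom2 (\<theta>f x)) F"
    and qq: "(qf \<longlongrightarrow> q0) F" and q0: "0 < q0" and qm: "q0 \<noteq> q2s \<theta>0"
  shows "((\<lambda>x. Phi (\<theta>f x) (qf x)) \<longlongrightarrow> Phi \<theta>0 q0) F"
proof -
  have QS: "((\<lambda>x. qf x - q2s (\<theta>f x)) \<longlongrightarrow> q0 - q2s \<theta>0) F"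
    by (intro tendsto_diff qq q2s_tendsto[OF k th t0 evd])
  show ?thesis
  proof (cases "q2s \<theta>0 < q0")
    case True
    have ev: "eventually (\<lambda>x. q2s (\<theta>f x) < qf x) F"
      using order_tendstoD(1)[OF QS, of 0] True by simp
    have "eventually (\<lambda>x. 0 = Phi (\<theta>f x) (qf x)) F"
      using ev evd by eventually_elim (simp add: Phi_neg[OF k])
    then have "((\<lambda>x. Phi (\<theta>f x) (qf x)) \<longlongrightarrow> 0) F"
      by (rule Lim_transform_eventually[OF tendsto_const])
    then show ?thesis using Phi_neg[OF k t0] True by simp
  next
    case False
    then have lt: "q0 < q2s \<theta>0" using qm by simp
    have ev: "eventually (\<lambda>x. qf x < q2s (\<theta>f x)) F"
      using order_tendstoD(2)[OF QS, of 0] lt by simp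
    have "((\<lambda>x. J2 (\<theta>f x) (qf x)) \<longlongrightarrow> J2 \<theta>0 q0) F" by (rule J2_tendsto[OF th qq q0])
    moreover have "eventually (\<lambda>x. J2 (\<theta>f x) (qf x) = Phi (\<theta>f x) (qf x)) F"
      using ev evd by eventually_elim (simp add: Phi_neg[OF k])
    ultimately show ?thesis using Phi_neg[OF k t0] lt by (simp add: Lim_transform_eventually)
  qed
qed

lemma Phi_large:
  assumes "Dm \<theta>" "0 < \<epsilon>"
  shows "\<exists>Q>0. \<forall>q\<ge>Q. Phi \<theta> q \<le> \<epsilon>"
  using assms(1)
proof (cases rule: Dm_cases)
  case 1
  have qn: "nt \<theta> \<le> qs \<theta> + 1" using qs_spec[OF 1] by simp
  define y1 where "y1 = J1 \<theta> (qs \<theta> + 1)"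
  have y1: "0 < y1" "y1 \<le> yt \<theta>" "h1 \<theta> y1 = qs \<theta> + 1" using J1_spec[OF 1 qn] unfolding y1_def by auto
  define y where "y = min (\<epsilon> / 2) (y1 / 2)"
  have y: "0 < y" "y < y1" "y \<le> \<epsilon>" unfolding y_def using y1 assms by auto
  define Q where "Q = h1 \<theta> y"
  have "h1 \<theta> y1 < h1 \<theta> y" by (rule h1_decr[OF 1 y(1) y(2) y1(2)])
  then have Qq: "qs \<theta> < Q" unfolding Q_def using y1 by simp
  have Q0: "0 < Q" using Qq qs_pos[OF 1] by simp
  have PQ: "Phi \<theta> Q = y"
    using Phi_pos[OF 1] Qq J1_eq[OF 1 y(1) _ refl[of "h1 \<theta> y"]] y y1 unfolding Q_def by simp
  show ?thesis
  proof (intro exI[of _ Q] conjI allI impI Q0)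
    fix q assume "Q \<le> q"
    then have "Phi \<theta> q \<le> Phi \<theta> Q" by (intro Phi_antimono[OF assms(1) Q0])
    then show "Phi \<theta> q \<le> \<epsilon>" using PQ y by simp
  qed
next
  case 2
  have q0: "0 < q2s \<theta> + 1" using q2s_spec[OF 2(1,2)] by simp
  show ?thesis
  proof (intro exI[of _ "q2s \<theta> + 1"] conjI allI impI q0)
    fix q assume "q2s \<theta> + 1 \<le> q"
    then show "Phi \<theta> q \<le> \<epsilon>" using Phi_neg[OF 2(1,2)] assms by simp
  qed
qed

lemma Phi_small:
  assumes "Dm \<theta>" "0 < \<theta> \<or> L \<le> \<gamma>"
  shows "\<exists>c>0. \<forall>q. 0 < q \<and> q \<le> c \<longrightarrow> L \<le> Phi \<theta> q"
  using assms(1)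
proof (cases rule: Dm_cases)
  case 1
  define L' where "L' = max L (\<gamma> + 1)"
  have L': "\<gamma> < L'" "L \<le> L'" unfolding L'_def by auto
  have hp: "0 < h2 \<theta> L'" unfolding h2_def using 1 L' a0 g0 by (intro mult_pos_pos add_pos_pos) auto
  define c where "c = min (qs \<theta>) (h2 \<theta> L')"
  have c0: "0 < c" unfolding c_def using qs_pos[OF 1] hp by simp
  show ?thesis
  proof (intro exI[of _ c] conjI allI impI c0)
    fix q assume q: "0 < q \<and> q \<le> c"
    have "Phi \<theta> q = J2 \<theta> q" using Phi_pos[OF 1] q unfolding c_def by simp
    moreover have "J2 \<theta> (h2 \<theta> L') = L'" by (rule J2_eq[OF hp L'(1) refl])
    moreover have "J2 \<theta> (h2 \<theta> L') \<le> J2 \<theta> q"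
      using J2_decr[of q "h2 \<theta> L'" \<theta>] q unfolding c_def by (cases "q = h2 \<theta> L'") auto
    ultimately show "L \<le> Phi \<theta> q" using L' by simp
  qed
next
  case 2
  have L: "L \<le> \<gamma>" using assms(2) 2 by simp
  show ?thesis
  proof (intro exI[of _ "q2s \<theta>"] conjI allI impI)
    show "0 < q2s \<theta>" using q2s_spec[OF 2(1,2)] by simp
    fix q assume q: "0 < q \<and> q \<le> q2s \<theta>"
    then show "L \<le> Phi \<theta> q" using Phi_neg[OF 2(1,2)] J2_gt[of q \<theta>] L by simp
  qed
qed

end

lemma normal_mgf_eq:
  assumes t: "0 < \<tau>"
  shows "normal_density 0 (sqrt \<tau>) x * exp (a * x) = exp (a\<^sup>2 * \<tau> / 2) * normal_density (a * \<tau>) (sqrt \<tau>) x"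
proof -
  have "- (x\<^sup>2 / (2 * \<tau>)) + a * x = - ((x - a * \<tau>)\<^sup>2 / (2 * \<tau>)) + a\<^sup>2 * \<tau> / 2"
    using t by (simp add: field_simps power2_eq_square)
  then have "exp (- (x\<^sup>2 / (2 * \<tau>))) * exp (a * x) = exp (a\<^sup>2 * \<tau> / 2) * exp (- ((x - a * \<tau>)\<^sup>2 / (2 * \<tau>)))"
    by (simp add: exp_add[symmetric] algebra_simps)
  then show ?thesis unfolding normal_density_def using t by simp
qed

lemma normal_mgf_integrable:
  assumes "0 < \<tau>"
  shows "integrable lborel (\<lambda>x. normal_density 0 (sqrt \<tau>) x * exp (a * x))"
  unfolding normal_mgf_eq[OF assms]
  using integrable_normal_density[where \<sigma>="sqrt \<tau>" and \<mu>="a * \<tau>"] assms by simp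

lemma normal_mgf_integral:
  assumes "0 < \<tau>"
  shows "(\<integral>x. normal_density 0 (sqrt \<tau>) x * exp (a * x) \<partial>lborel) = exp (a\<^sup>2 * \<tau> / 2)"
  unfolding normal_mgf_eq[OF assms]
  using integral_normal_density[where \<sigma>="sqrt \<tau>" and \<mu>="a * \<tau>"] assms by simp

locale bm = prm \<alpha> k \<gamma> for \<alpha> k \<gamma> :: real +
  fixes M :: "'a measure" and B :: "real \<Rightarrow> 'a \<Rightarrow> real" and \<mu> r \<sigma> \<tau> :: real
  assumes BM: "std_brownian_motion M B" and s0: "0 < \<sigma>" and ph0: "(\<mu> - r) / \<sigma> \<noteq> 0" and t0: "0 < \<tau>"
begin

definition ph :: real where "ph = (\<mu> - r) / \<sigma>"
definition c0 :: real where "c0 = (r + ph\<^sup>2 / 2) * \<tau>"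
definition ex :: "real \<Rightarrow> real" where "ex x = exp (- ph * x - c0)"
abbreviation "nd \<equiv> normal_density 0 (sqrt \<tau>)"

lemma phn: "ph \<noteq> 0" using ph0 unfolding ph_def .

lemma ex_pos: "0 < ex x" unfolding ex_def by simp

lemma psM: "prob_space M" using BM unfolding std_brownian_motion_def by simp

lemma measB: "0 \<le> t \<Longrightarrow> B t \<in> borel_measurable M" using BM unfolding std_brownian_motion_def by simp

lemma ae0: "AE \<omega> in M. B 0 \<omega> = 0" using BM unfolding std_brownian_motion_def by simp

lemma distB: "distributed M lborel (\<lambda>\<omega>. B \<tau> \<omega> - B 0 \<omega>) nd"
proof -
  have "distributed M lborel (\<lambda>\<omega>. B \<tau> \<omega> - B 0 \<omega>) (normal_density 0 (sqrt (\<tau> - 0)))"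
    using BM t0 unfolding std_brownian_motion_def by blast
  then show ?thesis by simp
qed

lemma pk_eq: "pricing_kernel ((\<mu> - r) / \<sigma>) r B \<tau> \<omega> = ex (B \<tau> \<omega>)"
  unfolding pricing_kernel_def ex_def ph_def c0_def by (simp add: algebra_simps)

lemma transfer:
  assumes g: "g \<in> borel_measurable borel"
  shows "integrable M (\<lambda>\<omega>. g (B \<tau> \<omega>)) \<longleftrightarrow> integrable lborel (\<lambda>x. nd x * g x)"
    and "(\<integral>\<omega>. g (B \<tau> \<omega>) \<partial>M) = (\<integral>x. nd x * g x \<partial>lborel)"
proof -
  have m1: "(\<lambda>\<omega>. g (B \<tau> \<omega>)) \<in> borel_measurable M"
    using measurable_compose[OF measB[of \<tau>] g] t0 by simp
  have m2: "(\<lambda>\<omega>. g (B \<tau> \<omega> - B 0 \<omega>)) \<in> borel_measurable M"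
    using measurable_compose[OF borel_measurable_diff[OF measB[of \<tau>] measB[of 0]] g] t0 by simp
  have ae: "AE \<omega> in M. g (B \<tau> \<omega>) = g (B \<tau> \<omega> - B 0 \<omega>)"
    using ae0 by eventually_elim simp
  have gl: "g \<in> borel_measurable lborel" using g by simp
  show "integrable M (\<lambda>\<omega>. g (B \<tau> \<omega>)) \<longleftrightarrow> integrable lborel (\<lambda>x. nd x * g x)"
    using integrable_cong_AE[OF m1 m2 ae] distributed_integrable[OF distB gl] by simp
  show "(\<integral>\<omega>. g (B \<tau> \<omega>) \<partial>M) = (\<integral>x. nd x * g x \<partial>lborel)"
    using integral_cong_AE[OF m1 m2 ae] distributed_integral[OF distB gl] by simp
qed

lemma ex_int: "integrable lborel (\<lambda>x. nd x * ex x)"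
  and ex_integral: "(\<integral>x. nd x * ex x \<partial>lborel) = exp (- r * \<tau>)"
proof -
  have e: "\<And>x. nd x * ex x = exp (- c0) * (nd x * exp ((- ph) * x))"
    unfolding ex_def by (simp add: exp_diff exp_minus field_simps)
  show "integrable lborel (\<lambda>x. nd x * ex x)" unfolding e using normal_mgf_integrable[OF t0, of "- ph"] by simp
  have "(\<integral>x. nd x * ex x \<partial>lborel) = exp (- c0) * exp ((- ph)\<^sup>2 * \<tau> / 2)"
    unfolding e using normal_mgf_integral[OF t0, of "- ph"] by simp
  also have "\<dots> = exp (- r * \<tau>)" unfolding c0_def by (simp add: exp_add[symmetric] algebra_simps)
  finally show "(\<integral>x. nd x * ex x \<partial>lborel) = exp (- r * \<tau>)" .
qed

lemma ex_powr_int: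
  "integrable lborel (\<lambda>x. nd x * (ex x * (lam * ex x / K) powr p))" if "0 < lam" "0 < K"
proof -
  have e: "\<And>x. nd x * (ex x * (lam * ex x / K) powr p)
     = exp (- c0 + p * (ln (lam / K) - c0)) * (nd x * exp ((- (1 + p) * ph) * x))"
  proof -
    fix x
    have "(lam * ex x / K) powr p = exp (p * (ln (lam / K) - ph * x - c0))"
      using that unfolding ex_def powr_def by (simp add: ln_mult ln_div algebra_simps)
    then show "nd x * (ex x * (lam * ex x / K) powr p)
     = exp (- c0 + p * (ln (lam / K) - c0)) * (nd x * exp ((- (1 + p) * ph) * x))"
      unfolding ex_def by (simp add: exp_add[symmetric] algebra_simps)
  qed
  show ?thesis unfolding e using normal_mgf_integrable[OF t0, of "- (1 + p) * ph"] by simp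
qed

end

context bm
begin

definition G :: "real \<Rightarrow> real \<Rightarrow> real \<Rightarrow> real" where
  "G \<theta> lam x = ex x * Phi \<theta> (lam * ex x)"

definition Fv :: "real \<Rightarrow> real \<Rightarrow> real" where
  "Fv \<theta> lam = (\<integral>x. nd x * G \<theta> lam x \<partial>lborel)"

lemma Phi_comp_meas:
  assumes "Dm \<theta>" "0 < lam"
  shows "(\<lambda>x. Phi \<theta> (lam * ex x)) \<in> borel_measurable borel"
proof -
  define Psi where "Psi u = - Phi \<theta> (exp u)" for u
  have "mono Psi"
  proof (rule monoI)
    fix u v :: real assume "u \<le> v"
    then have "Phi \<theta> (exp v) \<le> Phi \<theta> (exp u)" by (intro Phi_antimono[OF assms(1)]) auto
    then show "Psi u \<le> Psi v" unfolding Psi_def by simp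
  qed
  then have mP: "Psi \<in> borel_measurable borel" by (rule borel_measurable_mono)
  have e: "\<And>x. Phi \<theta> (lam * ex x) = - Psi (ln lam - ph * x - c0)"
    unfolding Psi_def ex_def using assms(2) by (simp add: exp_diff exp_minus exp_add field_simps)
  have "(\<lambda>x. ln lam - ph * x - c0) \<in> borel_measurable borel" by measurable
  then have "(\<lambda>x. Psi (ln lam - ph * x - c0)) \<in> borel_measurable borel"
    using measurable_compose[OF _ mP] by blast
  then show ?thesis unfolding e by measurable
qed

lemma G_meas:
  assumes "Dm \<theta>" "0 < lam"
  shows "G \<theta> lam \<in> borel_measurable borel"
proof -
  have "ex \<in> borel_measurable borel" unfolding ex_def[abs_def] by measurable
  then show ?thesis unfolding G_def[abs_def] using Phi_comp_meas[OF assms] by measurable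
qed

definition W :: "real \<Rightarrow> real \<Rightarrow> real \<Rightarrow> real" where
  "W ll T x = nd x * (\<gamma> * ex x + ex x * (ll * ex x / (\<alpha> * (1 + T))) powr (1 / (\<alpha> - 1)))"

lemma W_int:
  assumes "0 < ll" "0 \<le> T"
  shows "integrable lborel (W ll T)"
proof -
  have K: "0 < \<alpha> * (1 + T)" using a0 assms by simp
  have i1: "integrable lborel (\<lambda>x. \<gamma> * (nd x * ex x))" using ex_int by simp
  have i2: "integrable lborel (\<lambda>x. nd x * (ex x * (ll * ex x / (\<alpha> * (1 + T))) powr (1 / (\<alpha> - 1))))"
    by (rule ex_powr_int[OF assms(1) K])
  have "integrable lborel (\<lambda>x. \<gamma> * (nd x * ex x) + nd x * (ex x * (ll * ex x / (\<alpha> * (1 + T))) powr (1 / (\<alpha> - 1))))"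
    by (rule Bochner_Integration.integrable_add[OF i1 i2])
  then show ?thesis unfolding W_def by (simp add: algebra_simps)
qed

lemma G_bound:
  assumes "Dm \<theta>" "0 < ll" "ll \<le> lam" "\<theta> \<le> T" "0 \<le> T"
  shows "norm (nd x * G \<theta> lam x) \<le> W ll T x"
proof -
  have l0: "0 < lam" using assms by simp
  have q0: "0 < lam * ex x" using l0 ex_pos by simp
  have K: "0 < \<alpha> * (1 + T)" using a0 assms by simp
  have P0: "0 \<le> Phi \<theta> (lam * ex x)" by (rule Phi_nonneg[OF assms(1) q0])
  have P1: "Phi \<theta> (lam * ex x) \<le> \<gamma> + (lam * ex x / (\<alpha> * (1 + T))) powr (1 / (\<alpha> - 1))"
    by (rule Phi_upper[OF assms(1) q0 assms(4,5)])
  have "ll * ex x / (\<alpha> * (1 + T)) \<le> lam * ex x / (\<alpha> * (1 + T))"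
    using assms ex_pos[of x] K by (intro divide_right_mono mult_right_mono) auto
  then have "(lam * ex x / (\<alpha> * (1 + T))) powr (1 / (\<alpha> - 1)) \<le> (ll * ex x / (\<alpha> * (1 + T))) powr (1 / (\<alpha> - 1))"
    using powr_mono2'[of "1 / (\<alpha> - 1)" "ll * ex x / (\<alpha> * (1 + T))"] a1 assms(2) ex_pos[of x] K by simp
  then have P2: "Phi \<theta> (lam * ex x) \<le> \<gamma> + (ll * ex x / (\<alpha> * (1 + T))) powr (1 / (\<alpha> - 1))" using P1 by simp
  have "norm (nd x * G \<theta> lam x) = nd x * (ex x * Phi \<theta> (lam * ex x))"
    unfolding G_def using P0 ex_pos[of x] by (simp add: abs_mult)
  also have "\<dots> \<le> nd x * (ex x * (\<gamma> + (ll * ex x / (\<alpha> * (1 + T))) powr (1 / (\<alpha> - 1))))"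
    using P2 ex_pos[of x] by (intro mult_left_mono) auto
  also have "\<dots> = W ll T x" unfolding W_def by (simp add: algebra_simps)
  finally show ?thesis .
qed

lemma G_int:
  assumes "Dm \<theta>" "0 < lam"
  shows "integrable lborel (\<lambda>x. nd x * G \<theta> lam x)"
proof (rule Bochner_Integration.integrable_bound[OF W_int[OF assms(2), of "max \<theta> 0"]])
  show "(\<lambda>x. nd x * G \<theta> lam x) \<in> borel_measurable lborel"
    using G_meas[OF assms] by simp
  show "AE x in lborel. norm (nd x * G \<theta> lam x) \<le> norm (W lam (max \<theta> 0) x)"
  proof (rule AE_I2)
    fix x
    have "norm (nd x * G \<theta> lam x) \<le> W lam (max \<theta> 0) x"
      by (rule G_bound[OF assms(1,2) order.refl]) auto
    then show "norm (nd x * G \<theta> lam x) \<le> norm (W lam (max \<theta> 0) x)" by simp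
  qed
qed simp

lemma ex_inj: "ex x = ex y \<Longrightarrow> x = y"
  unfolding ex_def using phn by simp

lemma AE_ne:
  assumes "0 < l0"
  shows "AE x in lborel. l0 * ex x \<noteq> m0"
proof (cases "\<exists>z. l0 * ex z = m0")
  case True
  then obtain z where z: "l0 * ex z = m0" by blast
  show ?thesis using AE_lborel_singleton[of z]
  proof eventually_elim
    case (elim x)
    show ?case
    proof
      assume "l0 * ex x = m0"
      then have "l0 * ex x = l0 * ex z" using z by simp
      then have "ex x = ex z" using assms by simp
      then show False using ex_inj elim by blast
    qed
  qed
next
  case False then show ?thesis by simp
qed

lemma Fv_lim:
  assumes th: "\<theta>s \<longlonglongrightarrow> \<theta>0" and ls: "ls \<longlonglongrightarrow> l0" and ll: "0 < ll" "\<And>n. ll \<le> ls n" "ll \<le> l0"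
    and T: "\<And>n. \<theta>s n \<le> T" "\<theta>0 \<le> T" "0 \<le> T" and D: "\<And>n. Dm (\<theta>s n)" "Dm \<theta>0"
    and pw: "\<And>x. l0 * ex x \<noteq> m0 \<Longrightarrow> (\<lambda>n. Phi (\<theta>s n) (ls n * ex x)) \<longlonglongrightarrow> Phi \<theta>0 (l0 * ex x)"
  shows "(\<lambda>n. Fv (\<theta>s n) (ls n)) \<longlonglongrightarrow> Fv \<theta>0 l0"
  unfolding Fv_def
proof (rule integral_dominated_convergence[where w="W ll T"])
  have l0p: "0 < l0" using ll by simp
  show "(\<lambda>x. nd x * G \<theta>0 l0 x) \<in> borel_measurable lborel" using G_meas[OF D(2) l0p] by simp
  fix n
  have lp: "0 < ls n" using ll(1) ll(2)[of n] by simp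
  show "(\<lambda>x. nd x * G (\<theta>s n) (ls n) x) \<in> borel_measurable lborel" using G_meas[OF D(1) lp] by simp
  show "integrable lborel (W ll T)" by (rule W_int[OF ll(1) T(3)])
  show "AE x in lborel. norm (nd x * G (\<theta>s n) (ls n) x) \<le> W ll T x"
    by (rule AE_I2, rule G_bound[OF D(1) ll(1) ll(2) T(1) T(3)])
  show "AE x in lborel. (\<lambda>n. nd x * G (\<theta>s n) (ls n) x) \<longlonglongrightarrow> nd x * G \<theta>0 l0 x"
    using AE_ne[OF l0p, of m0]
  proof eventually_elim
    case (elim x)
    show ?case unfolding G_def by (intro tendsto_mult tendsto_const pw elim)
  qed
qed

end

context bm
begin

lemma not_AE_gt:
  assumes c: "0 < c"
  shows "\<not> (AE x in lborel. c < ex x)"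
proof
  assume ae: "AE x in lborel. c < ex x"
  define N where "N = ex -` {..c}"
  have exm: "ex \<in> borel_measurable borel" unfolding ex_def[abs_def] by measurable
  have "ex -` {..c} \<inter> space borel \<in> sets borel" by (rule measurable_sets[OF exm]) simp
  then have Nm: "N \<in> sets lborel" unfolding N_def by simp
  have "{x \<in> space lborel. \<not> c < ex x} = N" unfolding N_def by auto
  then have "(AE x in lborel. c < ex x) \<longleftrightarrow> emeasure lborel N = 0" by (rule AE_iff_measurable[OF Nm])
  then have N0: "emeasure lborel N = 0" using ae by simp
  define a where "a = (- c0 - ln c) / ph"
  have key: "\<And>x. a * ph \<le> x * ph \<Longrightarrow> x \<in> N"
  proof -
    fix x assume "a * ph \<le> x * ph"
    moreover have "a * ph = - c0 - ln c" unfolding a_def using phn by simp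
    ultimately have "- c0 - ln c \<le> ph * x" by (simp add: mult.commute)
    then have "- ph * x - c0 \<le> ln c" by simp
    then have "ex x \<le> exp (ln c)" unfolding ex_def by simp
    then show "x \<in> N" unfolding N_def using c by simp
  qed
  obtain I where I: "I \<subseteq> N" "emeasure lborel I = 1"
  proof (cases "0 < ph")
    case True
    have "{a..a + 1} \<subseteq> N"
    proof
      fix x assume "x \<in> {a..a + 1}"
      then have "a \<le> x" by simp
      then have "a * ph \<le> x * ph" using True by (intro mult_right_mono) auto
      then show "x \<in> N" by (rule key)
    qed
    then show ?thesis using that[of "{a..a+1}"] by simp
  next
    case False
    then have "ph < 0" using phn by simp
    have "{a - 1..a} \<subseteq> N"
    proof
      fix x assume "x \<in> {a - 1..a}"
      then have "x \<le> a" by simp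
      then have "a * ph \<le> x * ph" using \<open>ph < 0\<close> by (intro mult_right_mono_neg) auto
      then show "x \<in> N" by (rule key)
    qed
    then show ?thesis using that[of "{a-1..a}"] by simp
  qed
  have "emeasure lborel I \<le> emeasure lborel N" by (rule emeasure_mono[OF I(1) Nm])
  then show False using I N0 by simp
qed

lemma Fv_strict:
  assumes D: "Dm \<theta>" and l: "0 < l1" "l1 < l2"
  shows "Fv \<theta> l2 < Fv \<theta> l1"
proof (rule ccontr)
  assume "\<not> ?thesis"
  then have le: "Fv \<theta> l1 \<le> Fv \<theta> l2" by simp
  have l20: "0 < l2" using l by simp
  define d where "d x = nd x * G \<theta> l1 x - nd x * G \<theta> l2 x" for x
  have i1: "integrable lborel (\<lambda>x. nd x * G \<theta> l1 x)" by (rule G_int[OF D l(1)])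
  have i2: "integrable lborel (\<lambda>x. nd x * G \<theta> l2 x)" by (rule G_int[OF D l20])
  have id: "integrable lborel d" unfolding d_def by (rule Bochner_Integration.integrable_diff[OF i1 i2])
  have dnn: "\<And>x. 0 \<le> d x"
  proof -
    fix x
    have "Phi \<theta> (l2 * ex x) \<le> Phi \<theta> (l1 * ex x)"
      using ex_pos[of x] l by (intro Phi_antimono[OF D]) auto
    then have "ex x * Phi \<theta> (l2 * ex x) \<le> ex x * Phi \<theta> (l1 * ex x)"
      using ex_pos[of x] by (intro mult_left_mono) auto
    then have "0 \<le> ex x * Phi \<theta> (l1 * ex x) - ex x * Phi \<theta> (l2 * ex x)" by linarith
    then have "0 \<le> nd x * (ex x * Phi \<theta> (l1 * ex x) - ex x * Phi \<theta> (l2 * ex x))"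
      by (intro mult_nonneg_nonneg) auto
    then show "0 \<le> d x" unfolding d_def G_def by (simp add: algebra_simps)
  qed
  have "integral\<^sup>L lborel d = Fv \<theta> l1 - Fv \<theta> l2" unfolding d_def Fv_def using i1 i2 by simp
  moreover have "0 \<le> integral\<^sup>L lborel d" using dnn by simp
  ultimately have "integral\<^sup>L lborel d = 0" using le by simp
  then have ae: "AE x in lborel. d x = 0" using integral_nonneg_eq_0_iff_AE[OF id] dnn by simp
  define c where "c = (if 0 < \<theta> then 1 else q2s \<theta>)"
  have c0: "0 < c" unfolding c_def using D
    by (cases rule: Dm_cases) (auto simp: q2s_spec)
  have "AE x in lborel. c / l2 < ex x"
    using ae
  proof eventually_elim
    case (elim x)
    show ?case
    proof (rule ccontr)
      assume "\<not> c / l2 < ex x"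
      then have q2: "l2 * ex x \<le> c" using l20 by (simp add: field_simps)
      have "Phi \<theta> (l2 * ex x) < Phi \<theta> (l1 * ex x)"
      proof (rule Phi_strict[OF D])
        show "0 < l1 * ex x" using l ex_pos[of x] by simp
        show "l1 * ex x < l2 * ex x" using l ex_pos[of x] by simp
        assume "\<theta> \<le> 0" then show "l2 * ex x \<le> q2s \<theta>" using q2 unfolding c_def by simp
      qed
      then have "ex x * Phi \<theta> (l2 * ex x) < ex x * Phi \<theta> (l1 * ex x)"
        using ex_pos[of x] by simp
      then have "0 < ex x * Phi \<theta> (l1 * ex x) - ex x * Phi \<theta> (l2 * ex x)" by linarith
      moreover have "0 < nd x" using t0 by (simp add: normal_density_pos)
      ultimately have "0 < nd x * (ex x * Phi \<theta> (l1 * ex x) - ex x * Phi \<theta> (l2 * ex x))"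
        by (intro mult_pos_pos)
      then have "0 < d x" unfolding d_def G_def by (simp add: algebra_simps)
      then show False using elim by simp
    qed
  qed
  then show False using not_AE_gt[of "c / l2"] c0 l20 by simp
qed

lemma mth_Phi_tendsto:
  assumes D: "Dm \<theta>" and qq: "(qf \<longlongrightarrow> q0) F" and q0: "0 < q0" "q0 \<noteq> mth \<theta>"
  shows "((\<lambda>x. Phi \<theta> (qf x)) \<longlongrightarrow> Phi \<theta> q0) F"
  using D
proof (cases rule: Dm_cases)
  case 1
  show ?thesis using Phi_tendsto_pos[OF tendsto_const 1 qq q0(1)] q0 1 unfolding mth_def by simp
next
  case 2
  show ?thesis using Phi_tendsto_neg[OF 2(1) tendsto_const 2(2) _ qq q0(1)] q0 2 unfolding mth_def by simp
qed

lemma Fv_cont_lam: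
  assumes D: "Dm \<theta>" and la: "0 < la"
  shows "continuous_on {la..lb} (Fv \<theta>)"
proof (rule continuous_on_sequentiallyI)
  fix u :: "nat \<Rightarrow> real" and a
  assume u: "\<forall>n. u n \<in> {la..lb}" and a: "a \<in> {la..lb}" and lim: "u \<longlonglongrightarrow> a"
  show "(\<lambda>n. Fv \<theta> (u n)) \<longlonglongrightarrow> Fv \<theta> a"
  proof (rule Fv_lim[where \<theta>s="\<lambda>_. \<theta>" and ll=la and T="max \<theta> 0"])
    show "(\<lambda>n. \<theta>) \<longlonglongrightarrow> \<theta>" by simp
    show "u \<longlonglongrightarrow> a" by (rule lim)
    show "0 < la" by (rule la)
    show "\<And>n. la \<le> u n" using u by auto
    show "la \<le> a" using a by auto
    fix x assume x: "a * ex x \<noteq> mth \<theta>"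
    have "(\<lambda>n. u n * ex x) \<longlonglongrightarrow> a * ex x" by (intro tendsto_mult lim tendsto_const)
    then show "(\<lambda>n. Phi \<theta> (u n * ex x)) \<longlonglongrightarrow> Phi \<theta> (a * ex x)"
      by (rule mth_Phi_tendsto[OF D]) (use x a la ex_pos[of x] in auto)
  qed (use D in auto)
qed

lemma Fv_small:
  assumes D: "Dm \<theta>"
  shows "\<exists>lam>0. Fv \<theta> lam < 1"
proof -
  have lim: "(\<lambda>n. Fv \<theta> (real (Suc n))) \<longlonglongrightarrow> integral\<^sup>L lborel (\<lambda>x::real. 0::real)"
    unfolding Fv_def
  proof (rule integral_dominated_convergence[where w="W 1 (max \<theta> 0)"])
    show "(\<lambda>x::real. 0::real) \<in> borel_measurable lborel" by simp
    fix n
    show "(\<lambda>x. nd x * G \<theta> (real (Suc n)) x) \<in> borel_measurable lborel" using G_meas[OF D, of "real (Suc n)"] by simp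
    show "integrable lborel (W 1 (max \<theta> 0))" by (rule W_int) auto
    show "AE x in lborel. norm (nd x * G \<theta> (real (Suc n)) x) \<le> W 1 (max \<theta> 0) x"
      by (rule AE_I2, rule G_bound[OF D]) auto
    show "AE x in lborel. (\<lambda>n. nd x * G \<theta> (real (Suc n)) x) \<longlonglongrightarrow> 0"
    proof (rule AE_I2, rule LIMSEQ_I)
      fix x and e :: real assume e: "0 < e"
      have e2: "0 < e / (2 * (nd x + 1) * ex x)" using e ex_pos[of x] by (simp add: add_nonneg_pos)
      obtain Q where Q: "0 < Q" "\<And>q. Q \<le> q \<Longrightarrow> Phi \<theta> q \<le> e / (2 * (nd x + 1) * ex x)"
        using Phi_large[OF D e2] by blast
      define N where "N = nat \<lceil>Q / ex x\<rceil>"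
      show "\<exists>no. \<forall>n\<ge>no. norm (nd x * G \<theta> (real (Suc n)) x - 0) < e"
      proof (intro exI allI impI)
        fix n assume n: "N \<le> n"
        have "Q / ex x \<le> real N" unfolding N_def by linarith
        also have "\<dots> \<le> real (Suc n)" using n by simp
        finally have "Q \<le> real (Suc n) * ex x" using ex_pos[of x] by (simp add: field_simps)
        then have P: "Phi \<theta> (real (Suc n) * ex x) \<le> e / (2 * (nd x + 1) * ex x)" by (rule Q(2))
        have P0: "0 \<le> Phi \<theta> (real (Suc n) * ex x)" by (rule Phi_nonneg[OF D]) (use ex_pos[of x] in simp)
        have "norm (nd x * G \<theta> (real (Suc n)) x - 0) = nd x * (ex x * Phi \<theta> (real (Suc n) * ex x))"
          unfolding G_def using P0 ex_pos[of x] by (simp add: abs_mult)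
        also have "\<dots> \<le> (nd x + 1) * (ex x * (e / (2 * (nd x + 1) * ex x)))"
          using P P0 ex_pos[of x] by (intro mult_mono mult_left_mono) auto
        also have "\<dots> = e / 2"
        proof -
          have "0 < nd x + 1" using normal_density_nonneg[of 0 "sqrt \<tau>" x] by linarith
          then have pos: "0 < (nd x + 1) * ex x" using ex_pos[of x] by simp
          then show ?thesis by (simp add: field_simps)
        qed
        finally show "norm (nd x * G \<theta> (real (Suc n)) x - 0) < e" using e by simp
      qed
    qed
  qed
  then have "(\<lambda>n. Fv \<theta> (real (Suc n))) \<longlonglongrightarrow> 0" by simp
  then have "eventually (\<lambda>n. Fv \<theta> (real (Suc n)) < 1) sequentially" by (rule order_tendstoD) simp
  then obtain n where "Fv \<theta> (real (Suc n)) < 1" using eventually_sequentially by auto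
  then show ?thesis by (intro exI[of _ "real (Suc n)"]) auto
qed

lemma Fv_big:
  assumes D: "Dm \<theta>" and L: "0 < L" "0 < \<theta> \<or> L \<le> \<gamma>" "1 < L * exp (- r * \<tau>)"
  shows "\<exists>lam>0. 1 < Fv \<theta> lam"
proof -
  obtain c where c: "0 < c" "\<And>q. 0 < q \<and> q \<le> c \<Longrightarrow> L \<le> Phi \<theta> q" using Phi_small[OF D L(2)] by blast
  have exm: "ex \<in> borel_measurable borel" unfolding ex_def[abs_def] by measurable
  define h where "h n x = nd x * (L * ex x * indicator {x. ex x / real (Suc n) \<le> c} x)" for n x
  have hb: "norm (h n x) \<le> L * (nd x * ex x)" for n x
  proof -
    have nd0: "0 \<le> nd x" by simp
    have "0 \<le> h n x" unfolding h_def using L(1) ex_pos[of x] by (simp add: indicator_def)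
    moreover have "h n x \<le> L * (nd x * ex x)"
      unfolding h_def using L(1) ex_pos[of x] nd0 by (simp add: indicator_def)
    ultimately show ?thesis by simp
  qed
  have lim: "(\<lambda>n. integral\<^sup>L lborel (h n)) \<longlonglongrightarrow> integral\<^sup>L lborel (\<lambda>x. L * (nd x * ex x))"
  proof (rule integral_dominated_convergence[where w="\<lambda>x. L * (nd x * ex x)"])
    show "(\<lambda>x. L * (nd x * ex x)) \<in> borel_measurable lborel" using exm by measurable
    fix n
    show "h n \<in> borel_measurable lborel" unfolding h_def using exm by measurable
    show "integrable lborel (\<lambda>x. L * (nd x * ex x))" using ex_int by simp
    show "AE x in lborel. norm (h n x) \<le> L * (nd x * ex x)"
      by (rule AE_I2) (rule hb)
    show "AE x in lborel. (\<lambda>n. h n x) \<longlonglongrightarrow> L * (nd x * ex x)"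
    proof (rule AE_I2)
      fix x
      have "(\<lambda>n. ex x * inverse (real (Suc n))) \<longlonglongrightarrow> ex x * 0"
        by (intro tendsto_mult tendsto_const LIMSEQ_inverse_real_of_nat)
      then have "eventually (\<lambda>n. ex x * inverse (real (Suc n)) < c) sequentially"
        using c(1) by (intro order_tendstoD(2)) auto
      then have "eventually (\<lambda>n. L * (nd x * ex x) = h n x) sequentially"
        by eventually_elim (simp add: h_def divide_inverse)
      then show "(\<lambda>n. h n x) \<longlonglongrightarrow> L * (nd x * ex x)"
        by (rule Lim_transform_eventually[OF tendsto_const])
    qed
  qed
  moreover have "integral\<^sup>L lborel (\<lambda>x. L * (nd x * ex x)) = L * exp (- r * \<tau>)"
    using ex_integral by simp
  ultimately have "eventually (\<lambda>n. 1 < integral\<^sup>L lborel (h n)) sequentially"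
    using L(3) by (intro order_tendstoD(1)) auto
  then obtain n where n: "1 < integral\<^sup>L lborel (h n)" using eventually_sequentially by auto
  define lam where "lam = inverse (real (Suc n))"
  have lam0: "0 < lam" unfolding lam_def by simp
  have "integral\<^sup>L lborel (h n) \<le> Fv \<theta> lam"
    unfolding Fv_def
  proof (rule integral_mono)
    show "integrable lborel (h n)"
    proof (rule Bochner_Integration.integrable_bound)
      show "integrable lborel (\<lambda>x. L * (nd x * ex x))" using ex_int by simp
      show "h n \<in> borel_measurable lborel" unfolding h_def using exm by measurable
      show "AE x in lborel. norm (h n x) \<le> norm (L * (nd x * ex x))"
        by (rule AE_I2, rule order_trans[OF hb], simp)
    qed
    show "integrable lborel (\<lambda>x. nd x * G \<theta> lam x)" by (rule G_int[OF D lam0])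
    fix x
    have "L * ex x * indicator {x. ex x / real (Suc n) \<le> c} x \<le> ex x * Phi \<theta> (lam * ex x)"
    proof (cases "ex x / real (Suc n) \<le> c")
      case True
      have "L \<le> Phi \<theta> (lam * ex x)" using c(2)[of "lam * ex x"] True ex_pos[of x]
        unfolding lam_def by (simp add: divide_inverse mult.commute)
      then show ?thesis using True ex_pos[of x] by (simp add: mult.commute)
    next
      case False
      have "0 \<le> Phi \<theta> (lam * ex x)" by (rule Phi_nonneg[OF D]) (use lam0 ex_pos[of x] in simp)
      then show ?thesis using False ex_pos[of x] by simp
    qed
    then show "h n x \<le> nd x * G \<theta> lam x" unfolding h_def G_def by (intro mult_left_mono) auto
  qed
  then show ?thesis using n lam0 by (intro exI[of _ lam]) auto
qed

end

context bm
begin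

definition Cd :: "real \<Rightarrow> bool" where
  "Cd \<theta> \<longleftrightarrow> Dm \<theta> \<and> (0 < \<theta> \<or> exp (r * \<tau>) < \<gamma>)"

lemma root_ex:
  assumes C: "Cd \<theta>"
  shows "\<exists>!lam. 0 < lam \<and> Fv \<theta> lam = 1"
proof -
  have D: "Dm \<theta>" using C unfolding Cd_def by simp
  define L where "L = (if 0 < \<theta> then exp (r * \<tau>) + 1 else \<gamma>)"
  have L0: "0 < L" unfolding L_def using g0 by (simp add: add_pos_pos)
  have L1: "0 < \<theta> \<or> L \<le> \<gamma>" unfolding L_def by simp
  have L2: "1 < L * exp (- r * \<tau>)"
  proof (cases "0 < \<theta>")
    case True
    have "L * exp (- r * \<tau>) = 1 + exp (- r * \<tau>)" unfolding L_def using True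
      by (simp add: distrib_right exp_add[symmetric])
    then show ?thesis by simp
  next
    case False
    then have g: "exp (r * \<tau>) < \<gamma>" using C unfolding Cd_def by simp
    have "exp (r * \<tau>) * exp (- r * \<tau>) < \<gamma> * exp (- r * \<tau>)"
      using g by (intro mult_strict_right_mono) auto
    then show ?thesis unfolding L_def using False by (simp add: exp_add[symmetric])
  qed
  obtain la where la: "0 < la" "1 < Fv \<theta> la" using Fv_big[OF D L0 L1 L2] by blast
  obtain lb where lb: "0 < lb" "Fv \<theta> lb < 1" using Fv_small[OF D] by blast
  have ab: "la < lb"
  proof (rule ccontr)
    assume "\<not> la < lb"
    then have "lb \<le> la" by simp
    then have "Fv \<theta> la \<le> Fv \<theta> lb" using Fv_strict[OF D lb(1), of la] by (cases "lb = la") auto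
    then show False using la lb by simp
  qed
  have cont: "continuous_on {la..lb} (Fv \<theta>)" by (rule Fv_cont_lam[OF D la(1)])
  obtain lam where lam: "la \<le> lam" "lam \<le> lb" "Fv \<theta> lam = 1"
    using IVT2'[of "Fv \<theta>" lb 1 la] la lb ab cont by force
  show ?thesis
  proof (rule ex1I[of _ lam])
    show "0 < lam \<and> Fv \<theta> lam = 1" using lam la by simp
    fix p assume p: "0 < p \<and> Fv \<theta> p = 1"
    show "p = lam"
    proof (rule ccontr)
      assume "p \<noteq> lam"
      then consider "p < lam" | "lam < p" by linarith
      then show False
      proof cases
        case 1 then show False using Fv_strict[OF D _ 1] p lam by simp
      next
        case 2 then show False using Fv_strict[OF D _ 2] p lam la by simp
      qed
    qed
  qed
qed

definition Lr :: "real \<Rightarrow> real" where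
  "Lr \<theta> = (THE lam. 0 < lam \<and> Fv \<theta> lam = 1)"

lemma Lr_spec:
  assumes "Cd \<theta>"
  shows "0 < Lr \<theta>" "Fv \<theta> (Lr \<theta>) = 1"
  using theI'[OF root_ex[OF assms]] unfolding Lr_def by auto

lemma lambda_star_eq:
  assumes C: "Cd \<theta>"
  shows "lambda_star M B \<mu> r \<sigma> \<tau> \<alpha> k \<gamma> \<theta> = Lr \<theta>"
proof -
  have D: "Dm \<theta>" using C unfolding Cd_def by simp
  have X: "pricing_kernel ((\<mu> - r) / \<sigma>) r B \<tau> \<omega> *
           y_lam \<alpha> k \<gamma> \<theta> lam (pricing_kernel ((\<mu> - r) / \<sigma>) r B \<tau> \<omega>) = G \<theta> lam (B \<tau> \<omega>)" for lam \<omega>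
    unfolding pk_eq y_lam_Phi G_def ..
  have P: "(0 < lam \<and> integrable M (\<lambda>\<omega>. G \<theta> lam (B \<tau> \<omega>)) \<and> (\<integral>\<omega>. G \<theta> lam (B \<tau> \<omega>) \<partial>M) = 1)
      \<longleftrightarrow> (0 < lam \<and> Fv \<theta> lam = 1)" for lam
  proof (cases "0 < lam")
    case True
    have m: "G \<theta> lam \<in> borel_measurable borel" by (rule G_meas[OF D True])
    show ?thesis using transfer[OF m] G_int[OF D True] True unfolding Fv_def by simp
  qed simp
  show ?thesis unfolding lambda_star_def Let_def X P Lr_def ..
qed

lemma Fv_cont_theta:
  assumes S: "\<And>t. t \<in> S \<Longrightarrow> Dm t" and SS: "S = {0<..} \<or> (0 < k \<and> S = {t. dom2 t})"
    and t0: "\<theta>0 \<in> S" and lam: "0 < lam"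
  shows "continuous (at \<theta>0 within S) (\<lambda>\<theta>. Fv \<theta> lam)"
proof (rule continuous_within_sequentiallyI)
  fix u :: "nat \<Rightarrow> real" assume u: "u \<longlonglongrightarrow> \<theta>0" and uS: "\<forall>n. u n \<in> S"
  have "Bseq u" using u by (intro convergent_imp_Bseq) (auto simp: convergent_def)
  then obtain K where K: "0 < K" "\<And>n. norm (u n) \<le> K" by (rule BseqE) auto
  define T where "T = K + \<bar>\<theta>0\<bar>"
  show "(\<lambda>n. Fv (u n) lam) \<longlonglongrightarrow> Fv \<theta>0 lam"
  proof (rule Fv_lim[where ls="\<lambda>_. lam" and ll=lam and T=T])
    show "u \<longlonglongrightarrow> \<theta>0" by (rule u)
    show "\<And>n. u n \<le> T" unfolding T_def using K(2) by (smt (verit) abs_ge_zero real_norm_def abs_ge_self)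
    show "\<theta>0 \<le> T" unfolding T_def using K(1) by simp
    show "0 \<le> T" unfolding T_def using K(1) by simp
    show "\<And>n. Dm (u n)" using S uS by auto
    show "Dm \<theta>0" using S t0 by auto
    fix x assume x: "lam * ex x \<noteq> mth \<theta>0"
    have q0: "0 < lam * ex x" using lam ex_pos[of x] by simp
    show "(\<lambda>n. Phi (u n) (lam * ex x)) \<longlonglongrightarrow> Phi \<theta>0 (lam * ex x)"
      using SS
    proof
      assume S1: "S = {0<..}"
      then have p: "0 < \<theta>0" using t0 by simp
      show ?thesis
        by (rule Phi_tendsto_pos[OF u p tendsto_const q0]) (use x p in \<open>simp add: mth_def\<close>)
    next
      assume S2: "0 < k \<and> S = {t. dom2 t}"
      then have p: "dom2 \<theta>0" "0 < k" using t0 by auto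
      have ev: "eventually (\<lambda>n. dom2 (u n)) sequentially" using uS S2 by simp
      have np: "\<not> 0 < \<theta>0" using p unfolding dom2_def by simp
      show ?thesis
        by (rule Phi_tendsto_neg[OF p(2) u p(1) ev tendsto_const q0]) (use x np in \<open>simp add: mth_def\<close>)
    qed
  qed (use lam in auto)
qed

lemma Lr_cont:
  assumes S: "\<And>t. t \<in> S \<Longrightarrow> Cd t" and SS: "S = {0<..} \<or> (0 < k \<and> S = {t. dom2 t})"
  shows "continuous_on S Lr"
  unfolding continuous_on_eq_continuous_within
proof
  fix \<theta>0 assume t0: "\<theta>0 \<in> S"
  have SD: "\<And>t. t \<in> S \<Longrightarrow> Dm t" using S unfolding Cd_def by simp
  have evS: "eventually (\<lambda>t. t \<in> S) (at \<theta>0 within S)" by (simp add: eventually_at_filter)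
  have C0: "Cd \<theta>0" using S t0 by simp
  have D0: "Dm \<theta>0" using SD t0 by simp
  have s0: "0 < Lr \<theta>0" "Fv \<theta>0 (Lr \<theta>0) = 1" using Lr_spec[OF C0] by auto
  show "continuous (at \<theta>0 within S) Lr"
    unfolding continuous_within
  proof (rule order_tendstoI)
    fix a assume a: "a < Lr \<theta>0"
    define a' where "a' = max a (Lr \<theta>0 / 2)"
    have "0 < Lr \<theta>0 / 2" "Lr \<theta>0 / 2 < Lr \<theta>0" using s0 by auto
    then have a': "0 < a'" "a' < Lr \<theta>0" "a \<le> a'" using a unfolding a'_def by (auto simp: less_max_iff_disj)
    have "1 < Fv \<theta>0 a'" using Fv_strict[OF D0 a'(1) a'(2)] s0 by simp
    moreover have "((\<lambda>\<theta>. Fv \<theta> a') \<longlongrightarrow> Fv \<theta>0 a') (at \<theta>0 within S)"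
      using Fv_cont_theta[OF SD SS t0 a'(1)] unfolding continuous_within .
    ultimately have ev: "eventually (\<lambda>\<theta>. 1 < Fv \<theta> a') (at \<theta>0 within S)" by (rule order_tendstoD(1)[rotated])
    show "eventually (\<lambda>\<theta>. a < Lr \<theta>) (at \<theta>0 within S)"
      using ev evS
    proof eventually_elim
      case (elim t)
      have st: "0 < Lr t" "Fv t (Lr t) = 1" using Lr_spec S elim by auto
      have Dt: "Dm t" using SD elim by simp
      have "a' < Lr t"
      proof (rule ccontr)
        assume "\<not> a' < Lr t"
        then have "Lr t \<le> a'" by simp
        then have "Fv t a' \<le> Fv t (Lr t)" using Fv_strict[OF Dt st(1), of a'] by (cases "Lr t = a'") auto
        then show False using elim st by simp
      qed
      then show ?case using a' by simp
    qed
  next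
    fix b assume b: "Lr \<theta>0 < b"
    have b0: "0 < b" using b s0 by simp
    have "Fv \<theta>0 b < 1" using Fv_strict[OF D0 s0(1) b] s0 by simp
    moreover have "((\<lambda>\<theta>. Fv \<theta> b) \<longlongrightarrow> Fv \<theta>0 b) (at \<theta>0 within S)"
      using Fv_cont_theta[OF SD SS t0 b0] unfolding continuous_within .
    ultimately have ev: "eventually (\<lambda>\<theta>. Fv \<theta> b < 1) (at \<theta>0 within S)" by (rule order_tendstoD(2)[rotated])
    show "eventually (\<lambda>\<theta>. Lr \<theta> < b) (at \<theta>0 within S)"
      using ev evS
    proof eventually_elim
      case (elim t)
      have st: "0 < Lr t" "Fv t (Lr t) = 1" using Lr_spec S elim by auto
      have Dt: "Dm t" using SD elim by simp
      show ?case
      proof (rule ccontr)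
        assume "\<not> Lr t < b"
        then have "b \<le> Lr t" by simp
        then have "Fv t (Lr t) \<le> Fv t b" using Fv_strict[OF Dt b0, of "Lr t"] by (cases "Lr t = b") auto
        then show False using elim st by simp
      qed
    qed
  qed
qed

lemma lambda_star_cont:
  assumes S: "\<And>t. t \<in> S \<Longrightarrow> Cd t" and SS: "S = {0<..} \<or> (0 < k \<and> S = {t. dom2 t})"
  shows "continuous_on S (lambda_star M B \<mu> r \<sigma> \<tau> \<alpha> k \<gamma>)"
proof -
  have "continuous_on S Lr" by (rule Lr_cont[OF S SS])
  moreover have "\<And>t. t \<in> S \<Longrightarrow> Lr t = lambda_star M B \<mu> r \<sigma> \<tau> \<alpha> k \<gamma> t"
    using lambda_star_eq S by simp
  ultimately show ?thesis using continuous_on_cong by blast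
qed

end

theorem propositionA6:
  fixes M :: "'a measure" and B :: "real \<Rightarrow> 'a \<Rightarrow> real"
    and \<mu> r \<sigma> \<tau> \<alpha> k \<gamma> :: real
  assumes "std_brownian_motion M B"
    and "0 < \<sigma>" and "(\<mu> - r) / \<sigma> \<noteq> 0"
    and "0 < \<tau>" and "0 < \<alpha>" and "\<alpha> < 1" and "0 \<le> k" and "0 < \<gamma>"
  shows "continuous_on {0<..} (lambda_star M B \<mu> r \<sigma> \<tau> \<alpha> k \<gamma>) \<and>
         (\<gamma> > exp (r * \<tau>) \<and> 0 < k \<longrightarrow>
          continuous_on {theta_low \<alpha> k<..0} (lambda_star M B \<mu> r \<sigma> \<tau> \<alpha> k \<gamma>))"
proof -
  interpret bm \<alpha> k \<gamma> M B \<mu> r \<sigma> \<tau>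
    by unfold_locales (use assms in auto)
  have P1: "continuous_on {0<..} (lambda_star M B \<mu> r \<sigma> \<tau> \<alpha> k \<gamma>)"
    by (rule lambda_star_cont) (auto simp: Cd_def Dm_def)
  have P2: "continuous_on {theta_low \<alpha> k<..0} (lambda_star M B \<mu> r \<sigma> \<tau> \<alpha> k \<gamma>)"
    if h: "\<gamma> > exp (r * \<tau>)" "0 < k"
  proof -
    have S: "{theta_low \<alpha> k<..0} = {t. dom2 t}" unfolding dom2_def by auto
    show ?thesis unfolding S
      by (rule lambda_star_cont) (use h in \<open>auto simp: Cd_def Dm_def\<close>)
  qed
  show ?thesis using P1 P2 by blast
qed

end
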